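(* Assume $f$ is Lipschitz, convex, and satisfies $\mathbf{(AP)_b}$ with $\lambda_1<b<B$. For $z\in Z$ and $t\in\mathbb{R}$ write $u(z,t)=\Psi^{-1}(z+t\phi_1)=w(z,t)+t\phi_1$ with $w(z,t)\in W$. Then for every $z\in Z$, $$\lim_{|t|\to\infty}\Big\|\frac{w(z,t)}{t}\Big\|_X=\lim_{|t|\to\infty}\Big\|\frac{u(z,t)}{t}-\phi_1\Big\|_X=0.$$
   Context: Let $\Omega\subset\mathbb{R}^n$ be a bounded domain with $C^{1,1}$ boundary. Let $Lu=\mathrm{tr}(A(x)D^2u)+b(x)\cdot\nabla u+c(x)u$, where $A\in C(\overline\Omega)$ is symmetric-matrix valued with eigenvalues in $[\lambda,\Lambda]$, $\Lambda\ge\lambda>0$, and $|b|,|c|\le\Lambda$. Fix $p\ge n$, $X=\{u\in W^{2,p}(\Omega):u=0\text{ on }\partial\Omega\}$, $Y=L^p(\Omega)$. $\lambda_1=\sup\{\mu:\exists\,\phi\in W^{2,n}_{\rm loc}(\Omega),\phi>0,(L+\mu)\phi\le0\}$ is the principal (simple) Dirichlet eigenvalue of $-L$ with eigenfunction $\phi_1\in X$, $\phi_1>0$; the adjoint $L^*$ has the same principal eigenvalue with positive eigenfunction $\phi_1^*$. $Z=\{g\in Y:\int_\Omega g\phi_1^*=0\}$, $W=Z\cap X$; $P:Y=Z\oplus\mathbb{R}\phi_1\to Z$, $P(z+s\phi_1)=z$. $F(u)=-Lu-f(u)$. Condition $\mathbf{(AP)_b}$ (lower slope normalized to $a=0$,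 so $0<\lambda_1<b$): $0\le\frac{f(x)-f(y)}{x-y}\le b$ for $x\ne y$, and for some $M\ge0$, $f(s)\ge\max\{bs-M,-M\}$ for all $s$. $B=B(L,\Omega)>\lambda_1$ is a constant (depending only on $L,\Omega$) for which, whenever $\lambda_1<b<B$, the map $\Psi:X\to Y$, $\Psi(w+t\phi_1)=PF(w+t\phi_1)+t\phi_1$ ($w\in W$, $t\in\mathbb{R}$), is a bi-Lipschitz homeomorphism. *)

theory Defs
  imports "HOL-Analysis.Analysis"
begin

definition pdv :: "(real^'n \<Rightarrow> real) \<Rightarrow> 'n \<Rightarrow> real^'n \<Rightarrow> real" where
  "pdv \<phi> i = (\<lambda>x. frechet_derivative \<phi> (at x) (axis i 1))"

definition smooth_fun :: "(real^'n \<Rightarrow> real) \<Rightarrow> bool" where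
  "smooth_fun \<phi> \<longleftrightarrow> (\<forall>ks::'n list. \<forall>x. (foldr (\<lambda>i g. pdv g i) ks \<phi>) differentiable (at x))"

definition test_fun :: "(real^'n) set \<Rightarrow> (real^'n \<Rightarrow> real) \<Rightarrow> bool" where
  "test_fun \<Omega> \<phi> \<longleftrightarrow> smooth_fun \<phi> \<and> compact (closure {x. \<phi> x \<noteq> 0})
      \<and> closure {x. \<phi> x \<noteq> 0} \<subseteq> \<Omega>"

definition is_wpd :: "(real^'n) set \<Rightarrow> (real^'n \<Rightarrow> real) \<Rightarrow> 'n \<Rightarrow> (real^'n \<Rightarrow> real) \<Rightarrow> bool" where
  "is_wpd \<Omega> u i g \<longleftrightarrow> (\<forall>\<phi>. test_fun \<Omega> \<phi> \<longrightarrow>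
      integrable (lebesgue_on \<Omega>) (\<lambda>x. u x * pdv \<phi> i x)
    \<and> integrable (lebesgue_on \<Omega>) (\<lambda>x. g x * \<phi> x)
    \<and> (\<integral>x. u x * pdv \<phi> i x \<partial>lebesgue_on \<Omega>) = - (\<integral>x. g x * \<phi> x \<partial>lebesgue_on \<Omega>))"

definition wgh :: "(real^'n) set \<Rightarrow> (real^'n \<Rightarrow> real) \<Rightarrow> ('n \<Rightarrow> real^'n \<Rightarrow> real)
    \<Rightarrow> ('n \<Rightarrow> 'n \<Rightarrow> real^'n \<Rightarrow> real) \<Rightarrow> bool" where
  "wgh \<Omega> u g h \<longleftrightarrow> (\<forall>i. is_wpd \<Omega> u i (g i)) \<and> (\<forall>i j. is_wpd \<Omega> (g i) j (h i j))"

definition wgrad :: "(real^'n) set \<Rightarrow> (real^'n \<Rightarrow> real) \<Rightarrow> 'n \<Rightarrow> real^'n \<Rightarrow> real" where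
  "wgrad \<Omega> u = fst (SOME gh. wgh \<Omega> u (fst gh) (snd gh))"

definition whess :: "(real^'n) set \<Rightarrow> (real^'n \<Rightarrow> real) \<Rightarrow> 'n \<Rightarrow> 'n \<Rightarrow> real^'n \<Rightarrow> real" where
  "whess \<Omega> u = snd (SOME gh. wgh \<Omega> u (fst gh) (snd gh))"

definition Lp :: "real \<Rightarrow> (real^'n) set \<Rightarrow> (real^'n \<Rightarrow> real) \<Rightarrow> bool" where
  "Lp p S u \<longleftrightarrow> u \<in> borel_measurable (lebesgue_on S)
      \<and> integrable (lebesgue_on S) (\<lambda>x. \<bar>u x\<bar> powr p)"

definition Lp_norm :: "real \<Rightarrow> (real^'n) set \<Rightarrow> (real^'n \<Rightarrow> real) \<Rightarrow> real" where
  "Lp_norm p S u = (\<integral>x. \<bar>u x\<bar> powr p \<partial>lebesgue_on S) powr (1 / p)"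

definition W2p :: "real \<Rightarrow> (real^'n) set \<Rightarrow> (real^'n \<Rightarrow> real) \<Rightarrow> bool" where
  "W2p p \<Omega> u \<longleftrightarrow> Lp p \<Omega> u \<and> (\<exists>g h. wgh \<Omega> u g h \<and> (\<forall>i. Lp p \<Omega> (g i)) \<and> (\<forall>i j. Lp p \<Omega> (h i j)))"

definition W2p_loc :: "real \<Rightarrow> (real^'n) set \<Rightarrow> (real^'n \<Rightarrow> real) \<Rightarrow> bool" where
  "W2p_loc p \<Omega> u \<longleftrightarrow> (\<exists>g h. wgh \<Omega> u g h \<and> (\<forall>K. compact K \<and> K \<subseteq> \<Omega> \<longrightarrow>
      Lp p K u \<and> (\<forall>i. Lp p K (g i)) \<and> (\<forall>i j. Lp p K (h i j))))"

definition sob_norm :: "real \<Rightarrow> (real^'n) set \<Rightarrow> (real^'n \<Rightarrow> real) \<Rightarrow> real" where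
  "sob_norm p \<Omega> u = Lp_norm p \<Omega> u + (\<Sum>i\<in>UNIV. Lp_norm p \<Omega> (wgrad \<Omega> u i))
      + (\<Sum>i\<in>UNIV. \<Sum>j\<in>UNIV. Lp_norm p \<Omega> (whess \<Omega> u i j))"

text \<open>X = {u in W^{2,p}: u = 0 on the boundary}; for p >= n the class of u has a
  representative continuous on the closure, which must vanish on the boundary.\<close>
definition Xsp :: "real \<Rightarrow> (real^'n) set \<Rightarrow> (real^'n \<Rightarrow> real) \<Rightarrow> bool" where
  "Xsp p \<Omega> u \<longleftrightarrow> W2p p \<Omega> u \<and> (\<exists>v. continuous_on (closure \<Omega>) v
      \<and> (AE x in lebesgue_on \<Omega>. v x = u x) \<and> (\<forall>x\<in>frontier \<Omega>. v x = 0))"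

text \<open>C^{1,1} boundary: near every boundary point, Omega is the supergraph (in a direction nu)
  of a C^1 function with Lipschitz gradient defined on the hyperplane orthogonal to nu
  (encoded as a function on R^n constant along nu).\<close>
definition C11_boundary :: "(real^'n) set \<Rightarrow> bool" where
  "C11_boundary \<Omega> \<longleftrightarrow> (\<forall>x0\<in>frontier \<Omega>. \<exists>r>0. \<exists>\<nu> \<gamma> K.
      norm \<nu> = 1 \<and> (\<forall>x. \<gamma> differentiable (at x)) \<and> (\<forall>x s. \<gamma> (x + s *\<^sub>R \<nu>) = \<gamma> x)
    \<and> (\<forall>x y. norm ((\<chi> i. pdv \<gamma> i x) - (\<chi> i. pdv \<gamma> i y)) \<le> K * norm (x - y))
    \<and> \<Omega> \<inter> ball x0 r = {x \<in> ball x0 r. x \<bullet> \<nu> > \<gamma> x})"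

definition Lop :: "(real^'n) set \<Rightarrow> (real^'n \<Rightarrow> real^'n^'n) \<Rightarrow> (real^'n \<Rightarrow> real^'n)
    \<Rightarrow> (real^'n \<Rightarrow> real) \<Rightarrow> (real^'n \<Rightarrow> real) \<Rightarrow> real^'n \<Rightarrow> real" where
  "Lop \<Omega> A b c u x = (\<Sum>i\<in>UNIV. \<Sum>j\<in>UNIV. A x $ i $ j * whess \<Omega> u i j x)
      + (\<Sum>i\<in>UNIV. b x $ i * wgrad \<Omega> u i x) + c x * u x"

definition eig_set :: "(real^'n) set \<Rightarrow> (real^'n \<Rightarrow> real^'n^'n) \<Rightarrow> (real^'n \<Rightarrow> real^'n)
    \<Rightarrow> (real^'n \<Rightarrow> real) \<Rightarrow> real set" where
  "eig_set \<Omega> A b c = {\<mu>. \<exists>\<phi>. W2p_loc (real CARD('n)) \<Omega> \<phi> \<and> continuous_on \<Omega> \<phi>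
      \<and> (\<forall>x\<in>\<Omega>. \<phi> x > 0) \<and> (AE x in lebesgue_on \<Omega>. Lop \<Omega> A b c \<phi> x + \<mu> * \<phi> x \<le> 0)}"

text \<open>Coefficient s of g = z + s phi1 in Y = Z (+) R phi1 (psi = phi1^* ).\<close>
definition coef :: "(real^'n) set \<Rightarrow> (real^'n \<Rightarrow> real) \<Rightarrow> (real^'n \<Rightarrow> real) \<Rightarrow> (real^'n \<Rightarrow> real) \<Rightarrow> real" where
  "coef \<Omega> \<phi>1 \<psi> g = (\<integral>x. g x * \<psi> x \<partial>lebesgue_on \<Omega>) / (\<integral>x. \<phi>1 x * \<psi> x \<partial>lebesgue_on \<Omega>)"

definition Pproj :: "(real^'n) set \<Rightarrow> (real^'n \<Rightarrow> real) \<Rightarrow> (real^'n \<Rightarrow> real) \<Rightarrow> (real^'n \<Rightarrow> real) \<Rightarrow> real^'n \<Rightarrow> real" where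
  "Pproj \<Omega> \<phi>1 \<psi> g = (\<lambda>x. g x - coef \<Omega> \<phi>1 \<psi> g * \<phi>1 x)"

definition Fop :: "(real^'n) set \<Rightarrow> (real^'n \<Rightarrow> real^'n^'n) \<Rightarrow> (real^'n \<Rightarrow> real^'n)
    \<Rightarrow> (real^'n \<Rightarrow> real) \<Rightarrow> (real \<Rightarrow> real) \<Rightarrow> (real^'n \<Rightarrow> real) \<Rightarrow> real^'n \<Rightarrow> real" where
  "Fop \<Omega> A b c f u = (\<lambda>x. - Lop \<Omega> A b c u x - f (u x))"

definition Psi :: "(real^'n) set \<Rightarrow> (real^'n \<Rightarrow> real^'n^'n) \<Rightarrow> (real^'n \<Rightarrow> real^'n)
    \<Rightarrow> (real^'n \<Rightarrow> real) \<Rightarrow> (real^'n \<Rightarrow> real) \<Rightarrow> (real^'n \<Rightarrow> real) \<Rightarrow> (real \<Rightarrow> real)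
    \<Rightarrow> (real^'n \<Rightarrow> real) \<Rightarrow> real^'n \<Rightarrow> real" where
  "Psi \<Omega> A b c \<phi>1 \<psi> f u = (\<lambda>x. Pproj \<Omega> \<phi>1 \<psi> (Fop \<Omega> A b c f u) x + coef \<Omega> \<phi>1 \<psi> u * \<phi>1 x)"

text \<open>Psi : X -> Y is a bi-Lipschitz homeomorphism (elements of X, Y taken modulo a.e. equality).\<close>
definition bilip_homeo :: "real \<Rightarrow> (real^'n) set \<Rightarrow> (real^'n \<Rightarrow> real^'n^'n) \<Rightarrow> (real^'n \<Rightarrow> real^'n)
    \<Rightarrow> (real^'n \<Rightarrow> real) \<Rightarrow> (real^'n \<Rightarrow> real) \<Rightarrow> (real^'n \<Rightarrow> real) \<Rightarrow> (real \<Rightarrow> real) \<Rightarrow> bool" where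
  "bilip_homeo p \<Omega> A b c \<phi>1 \<psi> f \<longleftrightarrow>
     (\<forall>u. Xsp p \<Omega> u \<longrightarrow> Lp p \<Omega> (Psi \<Omega> A b c \<phi>1 \<psi> f u))
   \<and> (\<exists>K>0. \<forall>u v. Xsp p \<Omega> u \<and> Xsp p \<Omega> v \<longrightarrow>
        sob_norm p \<Omega> (\<lambda>x. u x - v x)
          \<le> K * Lp_norm p \<Omega> (\<lambda>x. Psi \<Omega> A b c \<phi>1 \<psi> f u x - Psi \<Omega> A b c \<phi>1 \<psi> f v x)
      \<and> Lp_norm p \<Omega> (\<lambda>x. Psi \<Omega> A b c \<phi>1 \<psi> f u x - Psi \<Omega> A b c \<phi>1 \<psi> f v x)
          \<le> K * sob_norm p \<Omega> (\<lambda>x. u x - v x))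
   \<and> (\<forall>y. Lp p \<Omega> y \<longrightarrow> (\<exists>u. Xsp p \<Omega> u \<and> (AE x in lebesgue_on \<Omega>. Psi \<Omega> A b c \<phi>1 \<psi> f u x = y x)))"

text \<open>Condition (AP)_b with a = 0.\<close>
definition AP_cond :: "real \<Rightarrow> (real \<Rightarrow> real) \<Rightarrow> bool" where
  "AP_cond bb f \<longleftrightarrow> (\<forall>x y. x \<noteq> y \<longrightarrow> 0 \<le> (f x - f y) / (x - y) \<and> (f x - f y) / (x - y) \<le> bb)
     \<and> (\<exists>M\<ge>0. \<forall>s. f s \<ge> max (bb * s - M) (- M))"

end

theory Submission
  imports Defs "HOL-Computational_Algebra.Polynomial"
begin



fun Cn :: "nat \<Rightarrow> (real \<Rightarrow> real) \<Rightarrow> bool" where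
  "Cn 0 g = True"
| "Cn (Suc n) g = ((\<forall>x. g field_differentiable (at x)) \<and> Cn n (deriv g))"

definition smooth1 :: "(real \<Rightarrow> real) \<Rightarrow> bool" where
  "smooth1 g \<longleftrightarrow> (\<forall>n. Cn n g)"

lemma Cn_mono: "Cn (Suc n) g \<Longrightarrow> Cn n g"
  by (induction n arbitrary: g) auto

lemma Cn_le: "m \<le> n \<Longrightarrow> Cn n g \<Longrightarrow> Cn m g"
proof (induction n)
  case (Suc n)
  show ?case
  proof (cases "m = Suc n")
    case False
    then show ?thesis using Suc Cn_mono[OF Suc.prems(2)] by auto
  qed (use Suc in auto)
qed simp

lemma deriv_add_fun:
  assumes "\<forall>x. g field_differentiable (at x)" "\<forall>x. h field_differentiable (at x)"
  shows "deriv (\<lambda>x. g x + h x) = (\<lambda>x. deriv g x + deriv h x)"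
proof
  fix x
  show "deriv (\<lambda>x. g x + h x) x = deriv g x + deriv h x"
    by (rule DERIV_imp_deriv) (use assms in \<open>auto intro!: derivative_intros simp: DERIV_deriv_iff_field_differentiable\<close>)
qed

lemma deriv_mult_fun:
  assumes "\<forall>x. g field_differentiable (at x)" "\<forall>x. h field_differentiable (at x)"
  shows "deriv (\<lambda>x. g x * h x) = (\<lambda>x. deriv g x * h x + g x * deriv h x)"
proof
  fix x
  show "deriv (\<lambda>x. g x * h x) x = deriv g x * h x + g x * deriv h x"
    by (rule DERIV_imp_deriv)
      (use DERIV_mult[of g "deriv g x" x UNIV h "deriv h x"] assms in \<open>auto simp: DERIV_deriv_iff_field_differentiable algebra_simps\<close>)
qed

lemma Cn_add: "Cn n g \<Longrightarrow> Cn n h \<Longrightarrow> Cn n (\<lambda>x. g x + h x)"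
proof (induction n arbitrary: g h)
  case (Suc n)
  then show ?case
    by (auto simp: deriv_add_fun intro!: field_differentiable_add)
qed simp

lemma Cn_mult: "Cn n g \<Longrightarrow> Cn n h \<Longrightarrow> Cn n (\<lambda>x. g x * h x)"
proof (induction n arbitrary: g h)
  case (Suc n)
  have "Cn n (\<lambda>x. deriv g x * h x + g x * deriv h x)"
    using Suc by (intro Cn_add Suc.IH) (auto intro: Cn_mono)
  then show ?case using Suc.prems
    by (auto simp: deriv_mult_fun intro!: field_differentiable_mult)
qed simp

lemma Cn_const: "Cn n (\<lambda>x. c)"
proof (induction n arbitrary: c)
  case (Suc n)
  have "deriv (\<lambda>x. c) = (\<lambda>x. 0)" by (rule ext) simp
  then show ?case using Suc by simp
qed simp

lemma Cn_affine: "Cn n g \<Longrightarrow> Cn n (\<lambda>s. g (\<alpha> * s + \<beta>))"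
proof (induction n arbitrary: g)
  case (Suc n)
  have d: "deriv (\<lambda>s. g (\<alpha> * s + \<beta>)) = (\<lambda>s. \<alpha> * deriv g (\<alpha> * s + \<beta>))"
  proof
    fix s
    have "((\<lambda>s. g (\<alpha> * s + \<beta>)) has_field_derivative deriv g (\<alpha> * s + \<beta>) * \<alpha>) (at s)"
      using Suc.prems
      by (auto intro!: derivative_eq_intros DERIV_chain2[where f=g] simp: DERIV_deriv_iff_field_differentiable)
    then show "deriv (\<lambda>s. g (\<alpha> * s + \<beta>)) s = \<alpha> * deriv g (\<alpha> * s + \<beta>)"
      by (simp add: DERIV_imp_deriv mult.commute)
  qed
  have "Cn n (\<lambda>s. \<alpha> * deriv g (\<alpha> * s + \<beta>))"
    using Suc by (intro Cn_mult[OF Cn_const]) auto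
  moreover have "\<forall>x. (\<lambda>s. g (\<alpha> * s + \<beta>)) field_differentiable (at x)"
  proof
    fix x
    have "((\<lambda>s. g (\<alpha> * s + \<beta>)) has_field_derivative deriv g (\<alpha> * x + \<beta>) * \<alpha>) (at x)"
      using Suc.prems
      by (auto intro!: derivative_eq_intros DERIV_chain2[where f=g] simp: DERIV_deriv_iff_field_differentiable)
    then show "(\<lambda>s. g (\<alpha> * s + \<beta>)) field_differentiable (at x)"
      by (auto simp: field_differentiable_def)
  qed
  ultimately show ?case by (simp add: d)
qed simp

lemma smooth1_mult: "smooth1 g \<Longrightarrow> smooth1 h \<Longrightarrow> smooth1 (\<lambda>x. g x * h x)"
  by (simp add: smooth1_def Cn_mult)

lemma smooth1_affine: "smooth1 g \<Longrightarrow> smooth1 (\<lambda>s. g (\<alpha> * s + \<beta>))"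
  by (simp add: smooth1_def Cn_affine)

lemma smooth1_deriv: "smooth1 g \<Longrightarrow> smooth1 (deriv g)"
  unfolding smooth1_def by (metis Cn.simps(2))

lemma smooth1_diff: "smooth1 g \<Longrightarrow> (g has_field_derivative deriv g x) (at x)"
  unfolding smooth1_def by (metis Cn.simps(2) DERIV_deriv_iff_field_differentiable)




lemma poly_exp_tendsto:
  fixes \<epsilon> :: real assumes e: "\<epsilon> > 0"
  shows "((\<lambda>w. poly q w * exp (- \<epsilon> * w)) \<longlongrightarrow> 0) at_top"
proof -
  have mono: "((\<lambda>w. w ^ i * exp (- \<epsilon> * w)) \<longlongrightarrow> 0) at_top" for i
  proof -
    have "((\<lambda>w. (\<epsilon> * w) ^ i / exp (\<epsilon> * w)) \<longlongrightarrow> 0) at_top"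
      by (rule filterlim_compose[OF tendsto_power_div_exp_0])
        (use e in \<open>auto intro!: filterlim_tendsto_pos_mult_at_top filterlim_ident\<close>)
    then have "((\<lambda>w. (1 / \<epsilon> ^ i) * ((\<epsilon> * w) ^ i / exp (\<epsilon> * w))) \<longlongrightarrow> (1 / \<epsilon> ^ i) * 0) at_top"
      by (intro tendsto_mult tendsto_const)
    moreover have "(1 / \<epsilon> ^ i) * ((\<epsilon> * w) ^ i / exp (\<epsilon> * w)) = w ^ i * exp (- \<epsilon> * w)" for w
      using e by (simp add: power_mult_distrib exp_minus field_simps)
    ultimately show ?thesis by simp
  qed
  have "((\<lambda>w. \<Sum>i\<le>degree q. coeff q i * (w ^ i * exp (- \<epsilon> * w))) \<longlongrightarrow> (\<Sum>i\<le>degree q. coeff q i * 0)) at_top"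
    by (intro tendsto_sum tendsto_mult tendsto_const mono)
  then show ?thesis
    by (simp add: poly_altdef sum_distrib_right mult.assoc)
qed

definition Ep :: "real \<Rightarrow> real poly \<Rightarrow> real \<Rightarrow> real" where
  "Ep \<epsilon> p y = (if y > 0 then poly p (1 / y) * exp (- \<epsilon> / y) else 0)"

definition dp :: "real \<Rightarrow> real poly \<Rightarrow> real poly" where
  "dp \<epsilon> p = [:0, 0, 1:] * (smult \<epsilon> p - pderiv p)"

lemma Ep_deriv:
  assumes e: "\<epsilon> > 0"
  shows "(Ep \<epsilon> p has_field_derivative Ep \<epsilon> (dp \<epsilon> p) y) (at y)"
proof (cases "y > 0")
  case True
  have "((\<lambda>y. poly p (1 / y) * exp (- \<epsilon> / y)) has_field_derivative
          poly (pderiv p) (1 / y) * (- 1 / y^2) * exp (- \<epsilon> / y) + poly p (1 / y) * (exp (- \<epsilon> / y) * (\<epsilon> / y^2))) (at y)"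
    using True
    by (auto intro!: derivative_eq_intros DERIV_chain2[OF poly_DERIV] simp: power2_eq_square field_simps)
  moreover have "poly (pderiv p) (1 / y) * (- 1 / y^2) * exp (- \<epsilon> / y) + poly p (1 / y) * (exp (- \<epsilon> / y) * (\<epsilon> / y^2))
      = Ep \<epsilon> (dp \<epsilon> p) y"
    using True by (simp add: Ep_def dp_def power2_eq_square field_simps)
  ultimately have "((\<lambda>y. poly p (1 / y) * exp (- \<epsilon> / y)) has_field_derivative Ep \<epsilon> (dp \<epsilon> p) y) (at y)"
    by simp
  then show ?thesis
    by (rule has_field_derivative_transform_within_open[where S="{0<..}"]) (use True in \<open>auto simp: Ep_def\<close>)
next
  case False
  show ?thesis
  proof (cases "y < 0")
    case True
    have "((\<lambda>y. 0) has_field_derivative Ep \<epsilon> (dp \<epsilon> p) y) (at y)"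
      using True by (simp add: Ep_def)
    then show ?thesis
      by (rule has_field_derivative_transform_within_open[where S="{..<0}"]) (use True in \<open>auto simp: Ep_def\<close>)
  next
    case False
    with \<open>\<not> y > 0\<close> have y: "y = 0" by simp
    have "((\<lambda>z. (Ep \<epsilon> p z - Ep \<epsilon> p 0) / (z - 0)) \<longlongrightarrow> 0) (at 0)"
    proof (rule filterlim_split_at)
      show "((\<lambda>z. (Ep \<epsilon> p z - Ep \<epsilon> p 0) / (z - 0)) \<longlongrightarrow> 0) (at_left 0)"
      proof (rule tendsto_eventually)
        show "\<forall>\<^sub>F z in at_left 0. (Ep \<epsilon> p z - Ep \<epsilon> p 0) / (z - 0) = 0"
          by (auto simp: eventually_at_left_field Ep_def intro!: exI[of _ "-1"])
      qed
    next
      have "((\<lambda>w. poly (pCons 0 p) w * exp (- \<epsilon> * w)) \<longlongrightarrow> 0) at_top"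
        by (rule poly_exp_tendsto[OF e])
      then have "((\<lambda>w. (Ep \<epsilon> p (inverse w) - Ep \<epsilon> p 0) / (inverse w - 0)) \<longlongrightarrow> 0) at_top"
      proof (rule Lim_transform_eventually)
        show "\<forall>\<^sub>F w in at_top. poly (pCons 0 p) w * exp (- \<epsilon> * w) = (Ep \<epsilon> p (inverse w) - Ep \<epsilon> p 0) / (inverse w - 0)"
          using eventually_gt_at_top[of 0]
          by eventually_elim (auto simp: Ep_def field_simps)
      qed
      then show "((\<lambda>z. (Ep \<epsilon> p z - Ep \<epsilon> p 0) / (z - 0)) \<longlongrightarrow> 0) (at_right 0)"
        by (simp add: filterlim_at_right_to_top)
    qed
    moreover have "Ep \<epsilon> (dp \<epsilon> p) y = 0" using y by (simp add: Ep_def)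
    ultimately show ?thesis
      using y by (simp add: has_field_derivative_iff)
  qed
qed

lemma Ep_smooth: assumes e: "\<epsilon> > 0" shows "smooth1 (Ep \<epsilon> p)"
proof -
  have "Cn n (Ep \<epsilon> p)" for n
  proof (induction n arbitrary: p)
    case (Suc n)
    have d: "deriv (Ep \<epsilon> p) = Ep \<epsilon> (dp \<epsilon> p)"
      using Ep_deriv[OF e] by (auto intro!: ext DERIV_imp_deriv)
    show ?case
      using Ep_deriv[OF e, of p] Suc.IH[of "dp \<epsilon> p"]
      by (auto simp: d field_differentiable_def)
  qed simp
  then show ?thesis by (simp add: smooth1_def)
qed




definition prodf :: "('n \<Rightarrow> real \<Rightarrow> real) \<Rightarrow> real^'n \<Rightarrow> real" where
  "prodf G x = (\<Prod>i\<in>UNIV. G i (x$i))"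

lemma coord_has_derivative:
  fixes x :: "real^'n" and i :: 'n
  assumes "(g has_field_derivative d) (at (x$i))"
  shows "((\<lambda>x. g (x$i)) has_derivative (\<lambda>h. h$i * d)) (at x)"
proof -
  have "((\<lambda>x::real^'n. x$i) has_derivative (\<lambda>h. h$i)) (at x)"
    by (rule bounded_linear_imp_has_derivative) (rule bounded_linear_vec_nth)
  from has_derivative_compose[OF this has_field_derivative_imp_has_derivative[OF assms]]
  show ?thesis by (simp add: mult.commute)
qed

lemma prodf_has_derivative:
  fixes G :: "'n::finite \<Rightarrow> real \<Rightarrow> real"
  assumes "\<And>i. (G i has_field_derivative G' i (x$i)) (at (x$i))"
  shows "(prodf G has_derivative (\<lambda>h. \<Sum>i\<in>UNIV. h$i * G' i (x$i) * (\<Prod>j\<in>UNIV - {i}. G j (x$j)))) (at x)"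
  unfolding prodf_def
  by (rule has_derivative_prod) (rule coord_has_derivative[OF assms])

lemma pdv_prodf:
  fixes G :: "'n::finite \<Rightarrow> real \<Rightarrow> real"
  assumes "\<And>i. smooth1 (G i)"
  shows "pdv (prodf G) k = prodf (G(k := deriv (G k)))"
proof
  fix x :: "real^'n"
  have hd: "(prodf G has_derivative (\<lambda>h. \<Sum>i\<in>UNIV. h$i * deriv (G i) (x$i) * (\<Prod>j\<in>UNIV - {i}. G j (x$j)))) (at x)"
    by (rule prodf_has_derivative) (rule smooth1_diff[OF assms])
  have "pdv (prodf G) k x = (\<Sum>i\<in>UNIV. (axis k 1 :: real^'n)$i * deriv (G i) (x$i) * (\<Prod>j\<in>UNIV - {i}. G j (x$j)))"
    unfolding pdv_def frechet_derivative_at[OF hd, symmetric] by simp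
  also have "\<dots> = deriv (G k) (x$k) * (\<Prod>j\<in>UNIV - {k}. G j (x$j))"
    by (subst sum.remove[of _ k]) (auto simp: axis_def)
  also have "\<dots> = prodf (G(k := deriv (G k))) x"
    unfolding prodf_def
    by (subst prod.remove[of _ k]) (auto intro!: prod.cong)
  finally show "pdv (prodf G) k x = prodf (G(k := deriv (G k))) x" .
qed

lemma prodf_differentiable:
  fixes G :: "'n::finite \<Rightarrow> real \<Rightarrow> real"
  assumes "\<And>i. smooth1 (G i)"
  shows "prodf G differentiable (at x)"
  using prodf_has_derivative[of G "\<lambda>i. deriv (G i)" x] smooth1_diff[OF assms]
  unfolding differentiable_def by blast

lemma smooth_fun_prodf:
  fixes G :: "'n::finite \<Rightarrow> real \<Rightarrow> real"
  assumes "\<And>i. smooth1 (G i)"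
  shows "smooth_fun (prodf G)"
proof -
  have "\<forall>G::'n \<Rightarrow> real \<Rightarrow> real. (\<forall>i. smooth1 (G i)) \<longrightarrow>
      (\<exists>G'. (\<forall>i. smooth1 (G' i)) \<and> foldr (\<lambda>i g. pdv g i) ks (prodf G) = prodf G')" for ks :: "'n list"
  proof (induction ks)
    case Nil then show ?case by auto
  next
    case (Cons k ks)
    show ?case
    proof (intro allI impI)
      fix G :: "'n \<Rightarrow> real \<Rightarrow> real" assume G: "\<forall>i. smooth1 (G i)"
      obtain G' where G': "\<forall>i. smooth1 (G' i)" "foldr (\<lambda>i g. pdv g i) ks (prodf G) = prodf G'"
        using Cons G by blast
      show "\<exists>G'. (\<forall>i. smooth1 (G' i)) \<and> foldr (\<lambda>i g. pdv g i) (k # ks) (prodf G) = prodf G'"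
        using G' by (intro exI[of _ "G'(k := deriv (G' k))"]) (auto simp: pdv_prodf smooth1_deriv)
    qed
  qed
  then show ?thesis
    unfolding smooth_fun_def using assms prodf_differentiable by metis
qed




lemma emeas_density_pos:
  fixes F :: "'a::euclidean_space \<Rightarrow> real"
  assumes F: "integrable lborel F" and A: "A \<in> sets borel"
  shows "emeasure (density lborel (\<lambda>x. ennreal (F x))) A = ennreal (\<integral>x. max 0 (F x) * indicator A x \<partial>lborel)"
proof -
  have m: "F \<in> borel_measurable lborel" using F by auto
  have "emeasure (density lborel (\<lambda>x. ennreal (F x))) A = (\<integral>\<^sup>+ x. ennreal (F x) * indicator A x \<partial>lborel)"
    using m A by (intro emeasure_density) auto
  also have "\<dots> = (\<integral>\<^sup>+ x. ennreal (max 0 (F x) * indicator A x) \<partial>lborel)"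
    by (intro nn_integral_cong) (auto simp: indicator_def ennreal_neg max_def)
  also have "\<dots> = ennreal (\<integral>x. max 0 (F x) * indicator A x \<partial>lborel)"
    using F A by (intro nn_integral_eq_integral) (auto intro!: integrable_real_mult_indicator integrable_max)
  finally show ?thesis .
qed

lemma box_zero_AE:
  fixes F :: "'a::euclidean_space \<Rightarrow> real"
  assumes F: "integrable lebesgue F"
    and box0: "\<And>c e. (\<integral>x. F x * indicator (box c e) x \<partial>lebesgue) = 0"
  shows "AE x in lebesgue. F x = 0"
proof -
  have "F \<in> borel_measurable lebesgue" using F by auto
  then obtain F' where F'm: "F' \<in> borel_measurable lborel" and ae: "AE x in lborel. F x = F' x"
    using completion_ex_borel_measurable_real by blast
  have aeL: "AE x in lebesgue. F x = F' x" using ae by (rule AE_completion)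
  have iF'L: "integrable lebesgue F'"
    using F'm aeL by (intro integrable_cong_AE_imp[OF F]) (auto intro: measurable_completion)
  have iF': "integrable lborel F'"
    using iF'L integrable_completion[OF F'm] by simp
  have int_eq: "(\<integral>x. F' x * indicator A x \<partial>lborel) = (\<integral>x. F x * indicator A x \<partial>lebesgue)"
    if "A \<in> sets borel" for A
  proof -
    have "(\<integral>x. F' x * indicator A x \<partial>lborel) = (\<integral>x. F' x * indicator A x \<partial>lebesgue)"
      using F'm that by (intro integral_completion[symmetric]) auto
    also have "\<dots> = (\<integral>x. F x * indicator A x \<partial>lebesgue)"
    proof (intro integral_cong_AE)
      have "F \<in> borel_measurable lebesgue" using F by auto
      moreover have "indicator A \<in> borel_measurable lebesgue"
        using that by (intro measurable_completion) auto
      ultimately show "(\<lambda>x. F x * indicator A x) \<in> borel_measurable lebesgue" by measurable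
    qed (use aeL F'm that in \<open>auto intro: measurable_completion\<close>)
    finally show ?thesis .
  qed
  have split: "(\<integral>x. F' x * indicator A x \<partial>lborel) =
     (\<integral>x. max 0 (F' x) * indicator A x \<partial>lborel) - (\<integral>x. max 0 (- F' x) * indicator A x \<partial>lborel)"
    if "A \<in> sets borel" for A
  proof -
    have "(\<integral>x. max 0 (F' x) * indicator A x \<partial>lborel) - (\<integral>x. max 0 (- F' x) * indicator A x \<partial>lborel)
        = (\<integral>x. max 0 (F' x) * indicator A x - max 0 (- F' x) * indicator A x \<partial>lborel)"
      using iF' that by (intro Bochner_Integration.integral_diff[symmetric])
        (auto intro!: integrable_real_mult_indicator integrable_max)
    also have "\<dots> = (\<integral>x. F' x * indicator A x \<partial>lborel)"
      by (intro Bochner_Integration.integral_cong) (auto simp: max_def indicator_def)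
    finally show ?thesis by simp
  qed
  let ?N1 = "density lborel (\<lambda>x. ennreal (F' x))"
  let ?N2 = "density lborel (\<lambda>x. ennreal (- F' x))"
  have iF'm: "integrable lborel (\<lambda>x. - F' x)" using iF' by auto
  have "?N1 = ?N2"
  proof (rule measure_eqI_generator_eq)
    let ?E = "range (\<lambda>(a, b). box a b::'a set)"
    show "Int_stable ?E"
      by (auto simp: Int_stable_def box_Int_box)
    show "?E \<subseteq> Pow UNIV" "sets ?N1 = sigma_sets UNIV ?E" "sets ?N2 = sigma_sets UNIV ?E"
      by (simp_all add: borel_eq_box)
    let ?A = "\<lambda>n::nat. box (- (real n *\<^sub>R One)) (real n *\<^sub>R One) :: 'a set"
    show "range ?A \<subseteq> ?E" "(\<Union>i. ?A i) = UNIV"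
      unfolding UN_box_eq_UNIV by auto
    show "emeasure ?N1 (?A i) \<noteq> \<infinity>" for i
      using emeas_density_pos[OF iF', of "?A i"] by simp
    show "emeasure ?N1 X = emeasure ?N2 X" if "X \<in> ?E" for X
    proof -
      obtain c e where X: "X = box c e" using \<open>X \<in> ?E\<close> by auto
      have "(\<integral>x. F' x * indicator X x \<partial>lborel) = 0"
        using int_eq[of X] box0[of c e] X by simp
      then show ?thesis
        using emeas_density_pos[OF iF', of X] emeas_density_pos[OF iF'm, of X] split[of X] X
        by simp
    qed
  qed
  have "AE x in lborel. F' x = 0"
  proof (rule sigma_finite_measure.density_zero[OF sigma_finite_lborel iF'])
    fix A :: "'a set" assume A: "A \<in> sets lborel"
    have "ennreal (\<integral>x. max 0 (F' x) * indicator A x \<partial>lborel) = ennreal (\<integral>x. max 0 (- F' x) * indicator A x \<partial>lborel)"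
      using emeas_density_pos[OF iF', of A] emeas_density_pos[OF iF'm, of A] A \<open>?N1 = ?N2\<close> by simp
    then have "(\<integral>x. max 0 (F' x) * indicator A x \<partial>lborel) = (\<integral>x. max 0 (- F' x) * indicator A x \<partial>lborel)"
      by (rule ennreal_inj[THEN iffD1, rotated 2]) (auto intro!: integral_nonneg_AE)
    then have "(\<integral>x. F' x * indicator A x \<partial>lborel) = 0" using split[of A] A by simp
    then show "set_lebesgue_integral lborel A F' = 0"
      by (simp add: set_lebesgue_integral_def mult.commute)
  qed
  then have "AE x in lborel. F x = 0" using ae by eventually_elim simp
  then show ?thesis by (rule AE_completion)
qed




definition bump :: "real \<Rightarrow> real^'n \<Rightarrow> real^'n \<Rightarrow> real^'n \<Rightarrow> real" where
  "bump \<epsilon> a b = prodf (\<lambda>i s. Ep \<epsilon> 1 (s - a$i) * Ep \<epsilon> 1 (b$i - s))"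

lemma Ep1: "Ep \<epsilon> 1 y = (if y > 0 then exp (- \<epsilon> / y) else 0)"
  by (simp add: Ep_def)

lemma smooth_fun_bump:
  assumes e: "\<epsilon> > 0"
  shows "smooth_fun (bump \<epsilon> a b)"
  unfolding bump_def
proof (rule smooth_fun_prodf)
  fix i
  have "smooth1 (\<lambda>s. Ep \<epsilon> 1 (1 * s + - (a$i)))" "smooth1 (\<lambda>s. Ep \<epsilon> 1 ((-1) * s + b$i))"
    by (intro smooth1_affine Ep_smooth e)+
  then have "smooth1 (\<lambda>s. Ep \<epsilon> 1 (1 * s + - (a$i)) * Ep \<epsilon> 1 ((-1) * s + b$i))"
    by (rule smooth1_mult)
  then show "smooth1 (\<lambda>s. Ep \<epsilon> 1 (s - a$i) * Ep \<epsilon> 1 (b$i - s))"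
    by simp
qed

lemma Ep1_bounds: "\<epsilon> \<ge> 0 \<Longrightarrow> 0 \<le> Ep \<epsilon> 1 y \<and> Ep \<epsilon> 1 y \<le> 1"
  by (auto simp: Ep1)

lemma bump_nonneg: "\<epsilon> \<ge> 0 \<Longrightarrow> 0 \<le> bump \<epsilon> a b x"
  unfolding bump_def prodf_def using Ep1_bounds by (auto intro!: prod_nonneg)

lemma bump_le1: "\<epsilon> \<ge> 0 \<Longrightarrow> bump \<epsilon> a b x \<le> 1"
  unfolding bump_def prodf_def using Ep1_bounds
  by (auto intro!: prod_le_1 mult_le_one mult_nonneg_nonneg)

lemma bump_nz: "bump \<epsilon> a b x \<noteq> 0 \<longleftrightarrow> x \<in> box a b"
  unfolding bump_def prodf_def mem_box_cart by (auto simp: Ep1)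

lemma bump_zero: "x \<notin> box a b \<Longrightarrow> bump \<epsilon> a b x = 0"
  using bump_nz by blast

lemma bump_cont: "\<epsilon> > 0 \<Longrightarrow> continuous_on UNIV (bump \<epsilon> a b)"
  using smooth_fun_bump unfolding smooth_fun_def
  by (metis differentiable_imp_continuous_on differentiable_on_def differentiable_at_withinI foldr.simps(1) id_apply)

lemma bump_borel: "\<epsilon> > 0 \<Longrightarrow> bump \<epsilon> a b \<in> borel_measurable borel"
  by (rule borel_measurable_continuous_onI) (rule bump_cont)

lemma test_fun_bump:
  assumes e: "\<epsilon> > 0" and ab: "cbox a b \<subseteq> \<Omega>"
  shows "test_fun \<Omega> (bump \<epsilon> a b)"
proof -
  have S: "{x. bump \<epsilon> a b x \<noteq> 0} = box a b" using bump_nz by blast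
  have "closure (box a b) \<subseteq> cbox a b"
    by (intro closure_minimal box_subset_cbox closed_cbox)
  then show ?thesis
    unfolding test_fun_def S using smooth_fun_bump[OF e] ab
    by (auto intro: compact_closure[THEN iffD2] bounded_box)
qed

lemma bump_lim:
  "(\<lambda>m. bump (1 / Suc m) a b x) \<longlonglongrightarrow> indicator (box a b) x"
proof (cases "x \<in> box a b")
  case True
  then have pos: "\<forall>i. x$i - a$i > 0 \<and> b$i - x$i > 0" by (auto simp: mem_box_cart)
  then have nz[simp]: "x$i \<noteq> a$i" "b$i \<noteq> x$i" for i by (metis less_irrefl diff_self)+
  have lim1: "(\<lambda>m. 1 / (1 + real m)) \<longlonglongrightarrow> 0"
    using LIMSEQ_Suc[OF lim_1_over_n] by simp
  have "(\<lambda>m. \<Prod>i\<in>UNIV. exp (- (1 / Suc m) / (x$i - a$i)) * exp (- (1 / Suc m) / (b$i - x$i)))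
      \<longlonglongrightarrow> (\<Prod>i\<in>(UNIV::'a set). exp (- 0 / (x$i - a$i)) * exp (- 0 / (b$i - x$i)))"
    by (intro tendsto_prod tendsto_mult tendsto_exp tendsto_divide tendsto_minus tendsto_const
        lim1) (auto intro: lim1)
  moreover have "bump (1 / Suc m) a b x = (\<Prod>i\<in>UNIV. exp (- (1 / Suc m) / (x$i - a$i)) * exp (- (1 / Suc m) / (b$i - x$i)))" for m
    unfolding bump_def prodf_def using pos by (simp add: Ep1)
  ultimately show ?thesis using True by simp
next
  case False
  then show ?thesis by (simp add: bump_zero)
qed

lemma bump_lower:
  fixes x :: "real^'n"
  assumes d: "\<delta> > 0" and x: "\<forall>i. a$i + \<delta> \<le> x$i \<and> x$i \<le> b$i - \<delta>"
  shows "bump 1 a b x \<ge> (exp (- 1 / \<delta>) * exp (- 1 / \<delta>)) ^ CARD('n)"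
proof -
  have low: "exp (- 1 / \<delta>) \<le> Ep 1 1 y" if "y \<ge> \<delta>" for y
    using that d by (auto simp: Ep1 divide_simps)
  have "(\<Prod>i\<in>(UNIV::'n set). exp (- 1 / \<delta>) * exp (- 1 / \<delta>)) \<le> bump 1 a b x"
    unfolding bump_def prodf_def
  proof (rule prod_mono)
    fix i :: 'n
    have "exp (- 1 / \<delta>) \<le> Ep 1 1 (x$i - a$i)" "exp (- 1 / \<delta>) \<le> Ep 1 1 (b$i - x$i)"
      using x[rule_format, of i] low[of "x$i - a$i"] low[of "b$i - x$i"] by auto
    then show "0 \<le> exp (- 1 / \<delta>) * exp (- 1 / \<delta>) \<and>
        exp (- 1 / \<delta>) * exp (- 1 / \<delta>) \<le> Ep 1 1 (x$i - a$i) * Ep 1 1 (b$i - x$i)"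
      by (auto intro!: mult_mono simp: Ep1_bounds)
  qed
  then show ?thesis by simp
qed




definition wk0 :: "(real^'n) set \<Rightarrow> (real^'n \<Rightarrow> real) \<Rightarrow> bool" where
  "wk0 \<Omega> d \<longleftrightarrow> (\<forall>\<phi>. test_fun \<Omega> \<phi> \<longrightarrow> integrable (lebesgue_on \<Omega>) (\<lambda>x. d x * \<phi> x)
      \<and> (\<integral>x. d x * \<phi> x \<partial>lebesgue_on \<Omega>) = 0)"

lemma bump_lebesgue: "\<epsilon> > 0 \<Longrightarrow> bump \<epsilon> a b \<in> borel_measurable lebesgue"
  by (intro measurable_completion) (simp add: bump_borel)

lemma FL_box:
  fixes a b :: "real^'n" and d :: "real^'n \<Rightarrow> real"
  assumes \<Omega>: "\<Omega> \<in> sets lebesgue" and ab: "cbox a b \<subseteq> \<Omega>" and \<delta>: "\<delta> > 0" and wk: "wk0 \<Omega> d"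
  shows "AE x in lebesgue. x \<in> box (\<chi> i. a$i + \<delta>) (\<chi> i. b$i - \<delta>) \<longrightarrow> d x = 0"
proof -
  define a1 :: "real^'n" where "a1 = (\<chi> i. a$i + \<delta>)"
  define b1 :: "real^'n" where "b1 = (\<chi> i. b$i - \<delta>)"
  have \<Omega>': "\<Omega> \<inter> space lebesgue \<in> sets lebesgue" using \<Omega> by simp
  have B\<Omega>: "x \<in> \<Omega>" if "x \<in> box a1 b1" for x
  proof -
    have "a$i \<le> x$i \<and> x$i \<le> b$i" for i
      using that \<delta> unfolding mem_box_cart a1_def b1_def by (auto dest: spec[of _ i])
    then have "x \<in> cbox a b" by (simp add: mem_box_cart)
    then show ?thesis using ab by auto
  qed
  define \<phi>0 where "\<phi>0 = bump 1 a b"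
  have t0: "test_fun \<Omega> \<phi>0" unfolding \<phi>0_def by (rule test_fun_bump) (use ab in auto)
  have i0: "integrable lebesgue (\<lambda>x. indicator \<Omega> x *\<^sub>R (d x * \<phi>0 x))"
    using wk t0 unfolding wk0_def integrable_restrict_space[OF \<Omega>'] by blast
  define c0 where "c0 = (exp (- 1 / \<delta>) * exp (- 1 / \<delta>)) ^ CARD('n)"
  have c0: "c0 > 0" unfolding c0_def by simp
  have low: "\<phi>0 x \<ge> c0" if "x \<in> box a1 b1" for x
    unfolding \<phi>0_def c0_def
    by (rule bump_lower[OF \<delta>]) (use that in \<open>auto simp: mem_box_cart a1_def b1_def less_imp_le\<close>)
  define F where "F = (\<lambda>x. d x * indicator (box a1 b1) x)"
  have Feq: "F x = indicator \<Omega> x *\<^sub>R (d x * \<phi>0 x) * (indicator (box a1 b1) x / \<phi>0 x)" for x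
  proof (cases "x \<in> box a1 b1")
    case True
    then show ?thesis using B\<Omega>[OF True] low[OF True] c0 by (simp add: F_def)
  qed (simp add: F_def)
  have \<phi>0m: "\<phi>0 \<in> borel_measurable lebesgue" unfolding \<phi>0_def by (rule bump_lebesgue) simp
  have Fm: "F \<in> borel_measurable lebesgue"
  proof -
    have "(\<lambda>x. indicator \<Omega> x *\<^sub>R (d x * \<phi>0 x)) \<in> borel_measurable lebesgue" using i0 by auto
    moreover have "indicator (box a1 b1) \<in> borel_measurable lebesgue"
      by (intro measurable_completion) simp
    ultimately have "(\<lambda>x. indicator \<Omega> x *\<^sub>R (d x * \<phi>0 x) * (indicator (box a1 b1) x / \<phi>0 x)) \<in> borel_measurable lebesgue"
      using \<phi>0m by measurable
    then show ?thesis by (simp add: Feq[abs_def])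
  qed
  have Fint: "integrable lebesgue F"
  proof (rule Bochner_Integration.integrable_bound[OF integrable_mult_right[OF i0, of "1 / c0"] Fm])
    show "AE x in lebesgue. norm (F x) \<le> norm (1 / c0 * (indicator \<Omega> x *\<^sub>R (d x * \<phi>0 x)))"
    proof (rule AE_I2)
      fix x
      show "norm (F x) \<le> norm (1 / c0 * (indicator \<Omega> x *\<^sub>R (d x * \<phi>0 x)))"
      proof (cases "x \<in> box a1 b1")
        case True
        have "\<bar>d x\<bar> * c0 \<le> \<bar>d x\<bar> * \<bar>\<phi>0 x\<bar>"
          using low[OF True] c0 by (intro mult_left_mono) auto
        then show ?thesis using True B\<Omega>[OF True] c0
          by (simp add: F_def abs_mult field_simps)
      qed (simp add: F_def)
    qed
  qed
  have boxes: "(\<integral>x. F x * indicator (box c e) x \<partial>lebesgue) = 0" for c e :: "real^'n"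
  proof -
    define \<alpha> :: "real^'n" where "\<alpha> = (\<chi> i. max (a1$i) (c$i))"
    define \<beta> :: "real^'n" where "\<beta> = (\<chi> i. min (b1$i) (e$i))"
    have Fbox: "F x * indicator (box c e) x = F x * indicator (box \<alpha> \<beta>) x" for x
      by (auto simp: F_def indicator_def mem_box_cart \<alpha>_def \<beta>_def)
    show ?thesis
    proof (cases "box \<alpha> \<beta> = {}")
      case True
      then show ?thesis by (simp add: Fbox)
    next
      case False
      then have lt: "\<forall>i. \<alpha>$i < \<beta>$i" by (simp add: interval_ne_empty_cart)
      have sub: "cbox \<alpha> \<beta> \<subseteq> \<Omega>"
      proof
        fix x assume x: "x \<in> cbox \<alpha> \<beta>"
        have "a$i \<le> x$i \<and> x$i \<le> b$i" for i
          using x \<delta> unfolding mem_box_cart \<alpha>_def \<beta>_def a1_def b1_def by (auto dest: spec[of _ i])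
        then have "x \<in> cbox a b" by (simp add: mem_box_cart)
        then show "x \<in> \<Omega>" using ab by auto
      qed
      define \<phi> where "\<phi> m = bump (1 / Suc m) \<alpha> \<beta>" for m
      have tm: "test_fun \<Omega> (\<phi> m)" for m
        unfolding \<phi>_def by (rule test_fun_bump[OF _ sub]) simp
      have eqm: "indicator \<Omega> x *\<^sub>R (d x * \<phi> m x) = F x * \<phi> m x" for m x
      proof (cases "x \<in> box \<alpha> \<beta>")
        case True
        then have "x \<in> box a1 b1" by (auto simp: mem_box_cart \<alpha>_def \<beta>_def)
        then show ?thesis using B\<Omega> by (simp add: F_def)
      next
        case False
        then show ?thesis by (simp add: \<phi>_def bump_zero)
      qed
      have zero: "(\<integral>x. F x * \<phi> m x \<partial>lebesgue) = 0" for m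
      proof -
        have "(\<integral>x. d x * \<phi> m x \<partial>lebesgue_on \<Omega>) = 0"
          using wk tm unfolding wk0_def by blast
        then show ?thesis
          unfolding integral_restrict_space[OF \<Omega>'] eqm .
      qed
      have \<phi>m: "\<phi> m \<in> borel_measurable lebesgue" for m
        unfolding \<phi>_def by (rule bump_lebesgue) simp
      have "(\<lambda>m. \<integral>x. F x * \<phi> m x \<partial>lebesgue) \<longlonglongrightarrow> (\<integral>x. F x * indicator (box \<alpha> \<beta>) x \<partial>lebesgue)"
      proof (rule integral_dominated_convergence[where w="\<lambda>x. norm (F x)"])
        show "(\<lambda>x. F x * indicator (box \<alpha> \<beta>) x) \<in> borel_measurable lebesgue"
        proof (rule borel_measurable_times[OF Fm])
          show "indicator (box \<alpha> \<beta>) \<in> borel_measurable lebesgue"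
            by (intro measurable_completion) simp
        qed
        show "(\<lambda>x. F x * \<phi> m x) \<in> borel_measurable lebesgue" for m
          using Fm \<phi>m by (intro borel_measurable_times)
        show "integrable lebesgue (\<lambda>x. norm (F x))" using Fint by auto
        show "AE x in lebesgue. (\<lambda>m. F x * \<phi> m x) \<longlonglongrightarrow> F x * indicator (box \<alpha> \<beta>) x"
          unfolding \<phi>_def by (intro AE_I2 tendsto_mult_left bump_lim)
        show "AE x in lebesgue. norm (F x * \<phi> m x) \<le> norm (F x)" for m
        proof (rule AE_I2)
          fix x
          have "0 \<le> \<phi> m x" "\<phi> m x \<le> 1" unfolding \<phi>_def by (simp_all add: bump_nonneg bump_le1)
          then show "norm (F x * \<phi> m x) \<le> norm (F x)"
            by (simp add: abs_mult mult_left_le)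
        qed
      qed
      then have "(\<integral>x. F x * indicator (box \<alpha> \<beta>) x \<partial>lebesgue) = 0"
        using zero by (simp add: LIMSEQ_const_iff)
      then show ?thesis by (simp add: Fbox)
    qed
  qed
  have "AE x in lebesgue. F x = 0" by (rule box_zero_AE[OF Fint boxes])
  then show ?thesis
    by eventually_elim (auto simp: F_def a1_def b1_def)
qed

lemma fund_lemma:
  fixes d :: "real^'n \<Rightarrow> real"
  assumes \<Omega>: "open \<Omega>" and wk: "wk0 \<Omega> d"
  shows "AE x in lebesgue_on \<Omega>. d x = 0"
proof -
  have \<Omega>L: "\<Omega> \<in> sets lebesgue" using \<Omega> by simp
  define \<F> where "\<F> = {box (\<chi> i. a$i + \<delta>) (\<chi> i. b$i - \<delta>) | (a::real^'n) b \<delta>. \<delta> > 0 \<and> cbox a b \<subseteq> \<Omega>}"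
  obtain \<F>' where F': "\<F>' \<subseteq> \<F>" "countable \<F>'" "\<Union>\<F>' = \<Union>\<F>"
    by (rule Lindelof[of \<F>]) (auto simp: \<F>_def)
  have cover: "\<Omega> \<subseteq> \<Union>\<F>"
  proof
    fix x assume "x \<in> \<Omega>"
    then obtain e where e: "e > 0" "ball x e \<subseteq> \<Omega>" using \<Omega> open_contains_ball by blast
    define t where "t = e / (2 * CARD('n))"
    have t: "t > 0" using e by (simp add: t_def)
    have Ct: "real CARD('n) * t = e / 2" by (simp add: t_def)
    define a :: "real^'n" where "a = (\<chi> i. x$i - t)"
    define b :: "real^'n" where "b = (\<chi> i. x$i + t)"
    have cb: "cbox a b \<subseteq> \<Omega>"
    proof
      fix y assume y: "y \<in> cbox a b"
      have yi: "x$i - t \<le> y$i \<and> y$i \<le> x$i + t" for i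
        using y by (simp add: mem_box_cart a_def b_def)
      have "dist x y \<le> (\<Sum>i\<in>UNIV. \<bar>(x - y)$i\<bar>)"
        unfolding dist_norm by (rule norm_le_l1_cart)
      also have "\<dots> \<le> (\<Sum>i\<in>(UNIV::'n set). t)"
      proof (rule sum_mono)
        fix i :: 'n
        show "\<bar>(x - y)$i\<bar> \<le> t" using yi[of i] by (auto simp: abs_le_iff)
      qed
      also have "\<dots> = e / 2" using Ct by simp
      finally have "y \<in> ball x e" using e by simp
      then show "y \<in> \<Omega>" using e by auto
    qed
    moreover have "x \<in> box (\<chi> i. a$i + t / 2) (\<chi> i. b$i - t / 2)"
      using t by (simp add: mem_box_cart a_def b_def)
    moreover have "box (\<chi> i. a$i + t / 2) (\<chi> i. b$i - t / 2) \<in> \<F>"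
      unfolding \<F>_def using t cb
      by (intro CollectI exI[of _ a] exI[of _ b] exI[of _ "t/2"]) auto
    ultimately show "x \<in> \<Union>\<F>" by blast
  qed
  have "\<forall>B\<in>\<F>'. AE x in lebesgue. x \<in> B \<longrightarrow> d x = 0"
  proof
    fix B assume "B \<in> \<F>'"
    then obtain a b \<delta> where "B = box (\<chi> i. a$i + \<delta>) (\<chi> i. b$i - \<delta>)" "\<delta> > 0" "cbox a b \<subseteq> \<Omega>"
      using F'(1) unfolding \<F>_def by blast
    then show "AE x in lebesgue. x \<in> B \<longrightarrow> d x = 0"
      using FL_box[OF \<Omega>L _ _ wk] by blast
  qed
  then have "AE x in lebesgue. \<forall>B\<in>\<F>'. x \<in> B \<longrightarrow> d x = 0"
    by (rule AE_ball_countable[OF F'(2), THEN iffD2])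
  then have "AE x in lebesgue. x \<in> \<Omega> \<longrightarrow> d x = 0"
    by eventually_elim (use cover F'(3) in blast)
  then show ?thesis
    using AE_restrict_space_iff[of \<Omega> lebesgue] \<Omega>L by simp
qed




section \<open>Measurability and L^p lemmas\<close>

lemma meas_AE_on:
  fixes f g :: "real^'n \<Rightarrow> real"
  assumes S: "S \<in> sets lebesgue" and f: "f \<in> borel_measurable (lebesgue_on S)"
    and ae: "AE x in lebesgue_on S. f x = g x"
  shows "g \<in> borel_measurable (lebesgue_on S)"
proof -
  have S': "S \<inter> space lebesgue \<in> sets lebesgue" using S by simp
  have f': "(\<lambda>x. indicator S x *\<^sub>R f x) \<in> borel_measurable lebesgue"
    using f borel_measurable_restrict_space_iff[OF S'] by blast
  have "AE x in lebesgue. x \<in> S \<longrightarrow> f x = g x"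
    using ae by (simp add: AE_restrict_space_iff[OF S'])
  then have "AE x in lebesgue. indicator S x *\<^sub>R f x = indicator S x *\<^sub>R g x"
    by eventually_elim (auto simp: indicator_def)
  then have "(\<lambda>x. indicator S x *\<^sub>R g x) \<in> borel_measurable lebesgue"
    by (rule borel_measurable_AE[OF f'])
  then show ?thesis using borel_measurable_restrict_space_iff[OF S'] by blast
qed

lemma Lp_norm_cong_AE:
  fixes f g :: "real^'n \<Rightarrow> real"
  assumes S: "S \<in> sets lebesgue" and f: "f \<in> borel_measurable (lebesgue_on S)"
    and ae: "AE x in lebesgue_on S. f x = g x"
  shows "Lp_norm p S f = Lp_norm p S g"
proof -
  have g: "g \<in> borel_measurable (lebesgue_on S)" by (rule meas_AE_on[OF S f ae])
  have "(\<integral>x. \<bar>f x\<bar> powr p \<partial>lebesgue_on S) = (\<integral>x. \<bar>g x\<bar> powr p \<partial>lebesgue_on S)"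
    by (rule integral_cong_AE) (use f g ae in \<open>auto elim: AE_mp\<close>)
  then show ?thesis by (simp add: Lp_norm_def)
qed

lemma Lp_norm_scale:
  assumes p: "p > 0"
  shows "Lp_norm p S (\<lambda>x. c * f x) = \<bar>c\<bar> * Lp_norm p S f"
proof -
  have "(\<integral>x. \<bar>c * f x\<bar> powr p \<partial>lebesgue_on S) = \<bar>c\<bar> powr p * (\<integral>x. \<bar>f x\<bar> powr p \<partial>lebesgue_on S)"
    by (simp add: abs_mult powr_mult)
  moreover have "(\<integral>x. \<bar>f x\<bar> powr p \<partial>lebesgue_on S) \<ge> 0" by (rule integral_nonneg_AE) simp
  ultimately show ?thesis
    using p by (simp add: Lp_norm_def powr_mult powr_powr)
qed

lemma Lp_norm_nonneg: "Lp_norm p S f \<ge> 0"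
  by (simp add: Lp_norm_def)

lemma Lp_scale: "Lp p S f \<Longrightarrow> Lp p S (\<lambda>x. c * f x)"
  unfolding Lp_def by (auto simp: abs_mult powr_mult)

lemma Lp_abs: "Lp p S f \<Longrightarrow> Lp p S (\<lambda>x. \<bar>f x\<bar>)"
  unfolding Lp_def by auto

lemma Lp_diff:
  assumes p: "p > 0" and f: "Lp p S f" and g: "Lp p S g"
  shows "Lp p S (\<lambda>x. f x - g x)"
proof -
  have fm: "f \<in> borel_measurable (lebesgue_on S)" and gm: "g \<in> borel_measurable (lebesgue_on S)"
    using f g by (auto simp: Lp_def)
  have bound: "\<bar>a - b\<bar> powr p \<le> 2 powr p * (\<bar>a\<bar> powr p + \<bar>b\<bar> powr p)" for a b :: real
  proof -
    have "\<bar>a - b\<bar> \<le> 2 * max \<bar>a\<bar> \<bar>b\<bar>" by auto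
    then have "\<bar>a - b\<bar> powr p \<le> (2 * max \<bar>a\<bar> \<bar>b\<bar>) powr p"
      using p by (intro powr_mono2) auto
    also have "\<dots> = 2 powr p * max \<bar>a\<bar> \<bar>b\<bar> powr p" by (simp add: powr_mult)
    also have "max \<bar>a\<bar> \<bar>b\<bar> powr p \<le> \<bar>a\<bar> powr p + \<bar>b\<bar> powr p"
      by (auto simp: max_def)
    finally show ?thesis by simp
  qed
  have "integrable (lebesgue_on S) (\<lambda>x. \<bar>f x - g x\<bar> powr p)"
  proof (rule Bochner_Integration.integrable_bound)
    show "integrable (lebesgue_on S) (\<lambda>x. 2 powr p * (\<bar>f x\<bar> powr p + \<bar>g x\<bar> powr p))"
      using f g by (auto simp: Lp_def)
    show "(\<lambda>x. \<bar>f x - g x\<bar> powr p) \<in> borel_measurable (lebesgue_on S)"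
      using fm gm by measurable
    show "AE x in lebesgue_on S. norm (\<bar>f x - g x\<bar> powr p) \<le> norm (2 powr p * (\<bar>f x\<bar> powr p + \<bar>g x\<bar> powr p))"
      using bound by (intro AE_I2) (simp add: abs_mult)
  qed
  then show ?thesis using fm gm by (auto simp: Lp_def)
qed

lemma Lp_add:
  assumes p: "p > 0" and f: "Lp p S f" and g: "Lp p S g"
  shows "Lp p S (\<lambda>x. f x + g x)"
  using Lp_diff[OF p f Lp_scale[OF g, of "-1"]] by simp

lemma Lp_const:
  assumes S: "S \<in> sets lebesgue" "emeasure lebesgue S < \<infinity>"
  shows "Lp p S (\<lambda>x. c)"
proof -
  have "finite_measure (lebesgue_on S)"
    using S by (intro finite_measureI) (simp add: emeasure_restrict_space)
  then show ?thesis unfolding Lp_def by (simp add: finite_measure.integrable_const)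
qed

lemma Lp_norm_mono:
  assumes p: "p > 0" and G: "Lp p S G" and R: "R \<in> borel_measurable (lebesgue_on S)"
    and le: "AE x in lebesgue_on S. \<bar>R x\<bar> \<le> G x"
  shows "Lp_norm p S R \<le> Lp_norm p S G"
proof -
  have le2: "AE x in lebesgue_on S. \<bar>R x\<bar> powr p \<le> \<bar>G x\<bar> powr p"
    using le by eventually_elim (use p in \<open>auto intro!: powr_mono2\<close>)
  have iG: "integrable (lebesgue_on S) (\<lambda>x. \<bar>G x\<bar> powr p)" using G by (simp add: Lp_def)
  have iR: "integrable (lebesgue_on S) (\<lambda>x. \<bar>R x\<bar> powr p)"
    by (rule Bochner_Integration.integrable_bound[OF iG]) (use R le2 in auto)
  have "(\<integral>x. \<bar>R x\<bar> powr p \<partial>lebesgue_on S) \<le> (\<integral>x. \<bar>G x\<bar> powr p \<partial>lebesgue_on S)"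
    by (rule integral_mono_AE[OF iR iG le2])
  moreover have "(\<integral>x. \<bar>R x\<bar> powr p \<partial>lebesgue_on S) \<ge> 0" by (rule integral_nonneg_AE) simp
  ultimately show ?thesis
    unfolding Lp_norm_def using p by (intro powr_mono2) auto
qed

section \<open>Uniqueness of weak derivatives\<close>

lemma wpd_unique:
  assumes \<Omega>: "open \<Omega>" and g: "is_wpd \<Omega> u i g" and g': "is_wpd \<Omega> u i g'"
  shows "AE x in lebesgue_on \<Omega>. g x = g' x"
proof -
  have "wk0 \<Omega> (\<lambda>x. g x - g' x)"
    unfolding wk0_def
  proof (intro allI impI conjI)
    fix \<phi> assume t: "test_fun \<Omega> \<phi>"
    have i1: "integrable (lebesgue_on \<Omega>) (\<lambda>x. g x * \<phi> x)" and i2: "integrable (lebesgue_on \<Omega>) (\<lambda>x. g' x * \<phi> x)"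
      using g g' t by (auto simp: is_wpd_def)
    have e1: "(\<integral>x. u x * pdv \<phi> i x \<partial>lebesgue_on \<Omega>) = - (\<integral>x. g x * \<phi> x \<partial>lebesgue_on \<Omega>)"
      and e2: "(\<integral>x. u x * pdv \<phi> i x \<partial>lebesgue_on \<Omega>) = - (\<integral>x. g' x * \<phi> x \<partial>lebesgue_on \<Omega>)"
      using g g' t by (auto simp: is_wpd_def)
    have eq: "(\<lambda>x. (g x - g' x) * \<phi> x) = (\<lambda>x. g x * \<phi> x - g' x * \<phi> x)"
      by (auto simp: algebra_simps)
    show "integrable (lebesgue_on \<Omega>) (\<lambda>x. (g x - g' x) * \<phi> x)"
      unfolding eq using i1 i2 by auto
    show "(\<integral>x. (g x - g' x) * \<phi> x \<partial>lebesgue_on \<Omega>) = 0"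
      unfolding eq using i1 i2 e1 e2 by (simp add: Bochner_Integration.integral_diff)
  qed
  then have "AE x in lebesgue_on \<Omega>. g x - g' x = 0" by (rule fund_lemma[OF \<Omega>])
  then show ?thesis by eventually_elim simp
qed

lemma wpd_cong_AE:
  assumes \<Omega>: "open \<Omega>" and g: "is_wpd \<Omega> u i g" and ae: "AE x in lebesgue_on \<Omega>. u x = v x"
    and v: "\<forall>\<phi>. test_fun \<Omega> \<phi> \<longrightarrow> integrable (lebesgue_on \<Omega>) (\<lambda>x. v x * pdv \<phi> i x)"
  shows "is_wpd \<Omega> v i g"
  unfolding is_wpd_def
proof (intro allI impI conjI)
  fix \<phi> assume t: "test_fun \<Omega> \<phi>"
  show "integrable (lebesgue_on \<Omega>) (\<lambda>x. v x * pdv \<phi> i x)" using v t by blast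
  show "integrable (lebesgue_on \<Omega>) (\<lambda>x. g x * \<phi> x)" using g t by (simp add: is_wpd_def)
  have "(\<integral>x. v x * pdv \<phi> i x \<partial>lebesgue_on \<Omega>) = (\<integral>x. u x * pdv \<phi> i x \<partial>lebesgue_on \<Omega>)"
  proof (rule integral_cong_AE)
    show "(\<lambda>x. v x * pdv \<phi> i x) \<in> borel_measurable (lebesgue_on \<Omega>)" using v t by auto
    show "(\<lambda>x. u x * pdv \<phi> i x) \<in> borel_measurable (lebesgue_on \<Omega>)" using g t by (auto simp: is_wpd_def)
    show "AE x in lebesgue_on \<Omega>. v x * pdv \<phi> i x = u x * pdv \<phi> i x" using ae by eventually_elim simp
  qed
  then show "(\<integral>x. v x * pdv \<phi> i x \<partial>lebesgue_on \<Omega>) = - (\<integral>x. g x * \<phi> x \<partial>lebesgue_on \<Omega>)"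
    using g t by (simp add: is_wpd_def)
qed

lemma wgh_unique:
  assumes \<Omega>: "open \<Omega>" and w: "wgh \<Omega> u g h" and w': "wgh \<Omega> u g' h'"
  shows "(\<forall>i. AE x in lebesgue_on \<Omega>. g i x = g' i x) \<and> (\<forall>i j. AE x in lebesgue_on \<Omega>. h i j x = h' i j x)"
proof (intro conjI allI)
  fix i
  show "AE x in lebesgue_on \<Omega>. g i x = g' i x"
    using w w' by (intro wpd_unique[OF \<Omega>]) (auto simp: wgh_def)
next
  fix i j
  have ae: "AE x in lebesgue_on \<Omega>. g i x = g' i x"
    using w w' by (intro wpd_unique[OF \<Omega>]) (auto simp: wgh_def)
  have "is_wpd \<Omega> (g' i) j (h i j)"
  proof (rule wpd_cong_AE[OF \<Omega> _ ae])
    show "is_wpd \<Omega> (g i) j (h i j)" using w by (simp add: wgh_def)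
    show "\<forall>\<phi>. test_fun \<Omega> \<phi> \<longrightarrow> integrable (lebesgue_on \<Omega>) (\<lambda>x. g' i x * pdv \<phi> j x)"
      using w' by (auto simp: wgh_def is_wpd_def)
  qed
  then show "AE x in lebesgue_on \<Omega>. h i j x = h' i j x"
    using w' by (intro wpd_unique[OF \<Omega>]) (auto simp: wgh_def)
qed

lemma wpd_lin:
  assumes g: "is_wpd \<Omega> u i g" and g': "is_wpd \<Omega> v i g'"
  shows "is_wpd \<Omega> (\<lambda>x. \<alpha> * u x + \<beta> * v x) i (\<lambda>x. \<alpha> * g x + \<beta> * g' x)"
  unfolding is_wpd_def
proof (intro allI impI conjI)
  fix \<phi> assume t: "test_fun \<Omega> \<phi>"
  have i: "integrable (lebesgue_on \<Omega>) (\<lambda>x. u x * pdv \<phi> i x)" "integrable (lebesgue_on \<Omega>) (\<lambda>x. v x * pdv \<phi> i x)"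
      "integrable (lebesgue_on \<Omega>) (\<lambda>x. g x * \<phi> x)" "integrable (lebesgue_on \<Omega>) (\<lambda>x. g' x * \<phi> x)"
    and e: "(\<integral>x. u x * pdv \<phi> i x \<partial>lebesgue_on \<Omega>) = - (\<integral>x. g x * \<phi> x \<partial>lebesgue_on \<Omega>)"
      "(\<integral>x. v x * pdv \<phi> i x \<partial>lebesgue_on \<Omega>) = - (\<integral>x. g' x * \<phi> x \<partial>lebesgue_on \<Omega>)"
    using g g' t by (auto simp: is_wpd_def)
  have eq1: "(\<lambda>x. (\<alpha> * u x + \<beta> * v x) * pdv \<phi> i x) = (\<lambda>x. \<alpha> * (u x * pdv \<phi> i x) + \<beta> * (v x * pdv \<phi> i x))"
    and eq2: "(\<lambda>x. (\<alpha> * g x + \<beta> * g' x) * \<phi> x) = (\<lambda>x. \<alpha> * (g x * \<phi> x) + \<beta> * (g' x * \<phi> x))"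
    by (auto simp: algebra_simps)
  show "integrable (lebesgue_on \<Omega>) (\<lambda>x. (\<alpha> * u x + \<beta> * v x) * pdv \<phi> i x)"
    unfolding eq1 using i by auto
  show "integrable (lebesgue_on \<Omega>) (\<lambda>x. (\<alpha> * g x + \<beta> * g' x) * \<phi> x)"
    unfolding eq2 using i by auto
  show "(\<integral>x. (\<alpha> * u x + \<beta> * v x) * pdv \<phi> i x \<partial>lebesgue_on \<Omega>) = - (\<integral>x. (\<alpha> * g x + \<beta> * g' x) * \<phi> x \<partial>lebesgue_on \<Omega>)"
    unfolding eq1 eq2 using i e by (simp add: Bochner_Integration.integral_add)
qed

lemma wgh_lin:
  assumes "wgh \<Omega> u g h" "wgh \<Omega> v g' h'"
  shows "wgh \<Omega> (\<lambda>x. \<alpha> * u x + \<beta> * v x) (\<lambda>i x. \<alpha> * g i x + \<beta> * g' i x) (\<lambda>i j x. \<alpha> * h i j x + \<beta> * h' i j x)"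
  using assms unfolding wgh_def by (auto intro: wpd_lin)

lemma wgh_some:
  assumes "wgh \<Omega> u g h"
  shows "wgh \<Omega> u (wgrad \<Omega> u) (whess \<Omega> u)"
proof -
  have "wgh \<Omega> u (fst (g, h)) (snd (g, h))" using assms by simp
  then have "wgh \<Omega> u (fst (SOME gh. wgh \<Omega> u (fst gh) (snd gh))) (snd (SOME gh. wgh \<Omega> u (fst gh) (snd gh)))"
    by (rule someI[where P="\<lambda>gh. wgh \<Omega> u (fst gh) (snd gh)"])
  then show ?thesis by (simp add: wgrad_def whess_def)
qed

lemma W2p_lin:
  assumes p: "p > 0" and u: "W2p p \<Omega> u" and v: "W2p p \<Omega> v"
  shows "W2p p \<Omega> (\<lambda>x. \<alpha> * u x + \<beta> * v x)"
proof -
  obtain g h where gh: "wgh \<Omega> u g h" "\<forall>i. Lp p \<Omega> (g i)" "\<forall>i j. Lp p \<Omega> (h i j)"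
    using u by (auto simp: W2p_def)
  obtain g' h' where gh': "wgh \<Omega> v g' h'" "\<forall>i. Lp p \<Omega> (g' i)" "\<forall>i j. Lp p \<Omega> (h' i j)"
    using v by (auto simp: W2p_def)
  have Lu: "Lp p \<Omega> u" and Lv: "Lp p \<Omega> v" using u v by (auto simp: W2p_def)
  show ?thesis
    unfolding W2p_def
    using wgh_lin[OF gh(1) gh'(1), of \<alpha> \<beta>] gh gh' Lu Lv
    by (intro conjI exI[of _ "\<lambda>i x. \<alpha> * g i x + \<beta> * g' i x"] exI[of _ "\<lambda>i j x. \<alpha> * h i j x + \<beta> * h' i j x"])
      (auto intro!: Lp_add[OF p] Lp_scale)
qed



lemma W2p_derivs_meas:
  assumes \<Omega>: "open \<Omega>" and u: "W2p p \<Omega> u"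
  shows "(\<forall>i. wgrad \<Omega> u i \<in> borel_measurable (lebesgue_on \<Omega>)) \<and> (\<forall>i j. whess \<Omega> u i j \<in> borel_measurable (lebesgue_on \<Omega>))"
proof -
  have \<Omega>L: "\<Omega> \<in> sets lebesgue" using \<Omega> by simp
  obtain g h where gh: "wgh \<Omega> u g h" "\<forall>i. Lp p \<Omega> (g i)" "\<forall>i j. Lp p \<Omega> (h i j)"
    using u by (auto simp: W2p_def)
  have U: "(\<forall>i. AE x in lebesgue_on \<Omega>. g i x = wgrad \<Omega> u i x) \<and> (\<forall>i j. AE x in lebesgue_on \<Omega>. h i j x = whess \<Omega> u i j x)"
    by (rule wgh_unique[OF \<Omega> gh(1) wgh_some[OF gh(1)]])
  show ?thesis
  proof (intro conjI allI)
    fix i show "wgrad \<Omega> u i \<in> borel_measurable (lebesgue_on \<Omega>)"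
      using meas_AE_on[OF \<Omega>L _ U[THEN conjunct1, rule_format, of i]] gh(2) by (auto simp: Lp_def)
  next
    fix i j show "whess \<Omega> u i j \<in> borel_measurable (lebesgue_on \<Omega>)"
      using meas_AE_on[OF \<Omega>L _ U[THEN conjunct2, rule_format, of i j]] gh(3) by (auto simp: Lp_def)
  qed
qed

lemma derivs_scale_AE:
  assumes \<Omega>: "open \<Omega>" and u: "W2p p \<Omega> u"
  shows "(\<forall>i. AE x in lebesgue_on \<Omega>. wgrad \<Omega> (\<lambda>x. c * u x) i x = c * wgrad \<Omega> u i x)
       \<and> (\<forall>i j. AE x in lebesgue_on \<Omega>. whess \<Omega> (\<lambda>x. c * u x) i j x = c * whess \<Omega> u i j x)"
proof -
  obtain g h where gh: "wgh \<Omega> u g h" using u by (auto simp: W2p_def)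
  have w1: "wgh \<Omega> u (wgrad \<Omega> u) (whess \<Omega> u)" by (rule wgh_some[OF gh])
  have w2: "wgh \<Omega> (\<lambda>x. c * u x + 0 * u x) (\<lambda>i x. c * wgrad \<Omega> u i x + 0 * wgrad \<Omega> u i x)
      (\<lambda>i j x. c * whess \<Omega> u i j x + 0 * whess \<Omega> u i j x)"
    by (rule wgh_lin[OF w1 w1])
  then have w2': "wgh \<Omega> (\<lambda>x. c * u x) (\<lambda>i x. c * wgrad \<Omega> u i x) (\<lambda>i j x. c * whess \<Omega> u i j x)" by simp
  show ?thesis
    using wgh_unique[OF \<Omega> wgh_some[OF w2'] w2'] by blast
qed

lemma sob_norm_scale:
  assumes \<Omega>: "open \<Omega>" and p: "p > 0" and u: "W2p p \<Omega> u"
  shows "sob_norm p \<Omega> (\<lambda>x. c * u x) = \<bar>c\<bar> * sob_norm p \<Omega> u"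
proof -
  have \<Omega>L: "\<Omega> \<in> sets lebesgue" using \<Omega> by simp
  note D = derivs_scale_AE[OF \<Omega> u, of c]
  note M = W2p_derivs_meas[OF \<Omega> u]
  have um: "u \<in> borel_measurable (lebesgue_on \<Omega>)" using u by (auto simp: W2p_def Lp_def)
  have g: "Lp_norm p \<Omega> (wgrad \<Omega> (\<lambda>x. c * u x) i) = \<bar>c\<bar> * Lp_norm p \<Omega> (wgrad \<Omega> u i)" for i
  proof -
    have m: "(\<lambda>x. c * wgrad \<Omega> u i x) \<in> borel_measurable (lebesgue_on \<Omega>)"
      using M by (intro borel_measurable_times borel_measurable_const) blast
    have ae: "AE x in lebesgue_on \<Omega>. c * wgrad \<Omega> u i x = wgrad \<Omega> (\<lambda>x. c * u x) i x"
      using D[THEN conjunct1, rule_format, of i] by eventually_elim simp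
    have "Lp_norm p \<Omega> (wgrad \<Omega> (\<lambda>x. c * u x) i) = Lp_norm p \<Omega> (\<lambda>x. c * wgrad \<Omega> u i x)"
      by (rule Lp_norm_cong_AE[OF \<Omega>L m ae, symmetric])
    then show ?thesis by (simp add: Lp_norm_scale[OF p])
  qed
  have h: "Lp_norm p \<Omega> (whess \<Omega> (\<lambda>x. c * u x) i j) = \<bar>c\<bar> * Lp_norm p \<Omega> (whess \<Omega> u i j)" for i j
  proof -
    have m: "(\<lambda>x. c * whess \<Omega> u i j x) \<in> borel_measurable (lebesgue_on \<Omega>)"
      using M by (intro borel_measurable_times borel_measurable_const) blast
    have ae: "AE x in lebesgue_on \<Omega>. c * whess \<Omega> u i j x = whess \<Omega> (\<lambda>x. c * u x) i j x"
      using D[THEN conjunct2, rule_format, of i j] by eventually_elim simp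
    have "Lp_norm p \<Omega> (whess \<Omega> (\<lambda>x. c * u x) i j) = Lp_norm p \<Omega> (\<lambda>x. c * whess \<Omega> u i j x)"
      by (rule Lp_norm_cong_AE[OF \<Omega>L m ae, symmetric])
    then show ?thesis by (simp add: Lp_norm_scale[OF p])
  qed
  show ?thesis
    unfolding sob_norm_def g h Lp_norm_scale[OF p]
    by (simp add: sum_distrib_left distrib_left)
qed




lemma AP_bound:
  assumes "AP_cond bb f"
  shows "\<exists>C0\<ge>0. \<forall>s. (s \<ge> 0 \<longrightarrow> \<bar>f s - bb * s\<bar> \<le> C0) \<and> (s \<le> 0 \<longrightarrow> \<bar>f s\<bar> \<le> C0)"
proof -
  obtain M where M: "M \<ge> 0" "\<forall>s. f s \<ge> max (bb * s - M) (- M)"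
    using assms by (auto simp: AP_cond_def)
  have sl: "0 \<le> (f x - f y) / (x - y) \<and> (f x - f y) / (x - y) \<le> bb" if "x \<noteq> y" for x y
    using assms that by (auto simp: AP_cond_def)
  have pos: "f 0 \<le> f s \<and> f s \<le> f 0 + bb * s" if "s > 0" for s
    using sl[of s 0] that by (auto simp: divide_simps split: if_splits)
  have neg: "f s \<le> f 0" if "s < 0" for s
    using sl[of s 0] that by (auto simp: divide_simps split: if_splits)
  show ?thesis
  proof (intro exI[of _ "M + \<bar>f 0\<bar>"] conjI allI impI)
    show "0 \<le> M + \<bar>f 0\<bar>" using M by simp
  next
    fix s :: real assume s: "s \<ge> 0"
    have "f s \<ge> bb * s - M" using M(2)[rule_format, of s] by simp
    moreover have "f s \<le> f 0 + bb * s" using pos[of s] s by (cases "s = 0") auto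
    ultimately show "\<bar>f s - bb * s\<bar> \<le> M + \<bar>f 0\<bar>"
      using M(1) abs_ge_self[of "f 0"] by (simp add: abs_le_iff)
  next
    fix s :: real assume s: "s \<le> 0"
    have "f s \<ge> - M" using M(2)[rule_format, of s] by simp
    moreover have "f s \<le> f 0" using neg[of s] s by (cases "s = 0") auto
    ultimately show "\<bar>f s\<bar> \<le> M + \<bar>f 0\<bar>"
      using M(1) abs_ge_self[of "f 0"] by (simp add: abs_le_iff)
  qed
qed

lemma Xsp_scale:
  assumes p: "p > 0" and u: "Xsp p \<Omega> u"
  shows "Xsp p \<Omega> (\<lambda>x. t * u x)"
proof -
  have w: "W2p p \<Omega> u" using u by (simp add: Xsp_def)
  have "W2p p \<Omega> (\<lambda>x. t * u x + 0 * u x)" by (rule W2p_lin[OF p w w])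
  then have w': "W2p p \<Omega> (\<lambda>x. t * u x)" by simp
  obtain v where v: "continuous_on (closure \<Omega>) v" "AE x in lebesgue_on \<Omega>. v x = u x" "\<forall>x\<in>frontier \<Omega>. v x = 0"
    using u by (auto simp: Xsp_def)
  show ?thesis
    unfolding Xsp_def using w' v
    by (intro conjI exI[of _ "\<lambda>x. t * v x"]) (auto intro: continuous_intros elim: AE_mp)
qed

lemma lipschitz_cont:
  fixes f :: "real \<Rightarrow> real"
  assumes "\<forall>x y. \<bar>f x - f y\<bar> \<le> K * \<bar>x - y\<bar>"
  shows "continuous_on UNIV f"
proof -
  have "\<bar>f 1 - f 0\<bar> \<le> K" using assms[rule_format, of 1 0] by simp
  then have K: "K \<ge> 0" using abs_ge_zero[of "f 1 - f 0"] by linarith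
  have "lipschitz_on K UNIV f"
    using assms K by (auto simp: lipschitz_on_def dist_real_def)
  then show ?thesis by (rule lipschitz_on_continuous_on)
qed

theorem lemma2p14:
  fixes \<Omega> :: "(real^'n) set"
    and A :: "real^'n \<Rightarrow> real^'n^'n" and b :: "real^'n \<Rightarrow> real^'n" and c :: "real^'n \<Rightarrow> real"
    and p lmin lmax lam1 bb B :: real
    and \<phi>1 \<psi> z :: "real^'n \<Rightarrow> real" and f :: "real \<Rightarrow> real"
    and u :: "real \<Rightarrow> real^'n \<Rightarrow> real"
  assumes dom: "open \<Omega>" "bounded \<Omega>" "connected \<Omega>" "\<Omega> \<noteq> {}" "C11_boundary \<Omega>"
    and p: "p \<ge> real CARD('n)"
    and ell: "0 < lmin" "lmin \<le> lmax"
      "continuous_on (closure \<Omega>) A"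
      "\<forall>x\<in>closure \<Omega>. transpose (A x) = A x"
      "\<forall>x\<in>closure \<Omega>. \<forall>\<mu> v. v \<noteq> 0 \<and> A x *v v = \<mu> *\<^sub>R v \<longrightarrow> lmin \<le> \<mu> \<and> \<mu> \<le> lmax"
      "b \<in> borel_measurable lebesgue" "c \<in> borel_measurable lebesgue"
      "\<forall>x\<in>\<Omega>. norm (b x) \<le> lmax \<and> \<bar>c x\<bar> \<le> lmax"
    and eig: "bdd_above (eig_set \<Omega> A b c)" "lam1 = Sup (eig_set \<Omega> A b c)"
      "Xsp p \<Omega> \<phi>1" "continuous_on (closure \<Omega>) \<phi>1" "\<forall>x\<in>\<Omega>. \<phi>1 x > 0"
      "AE x in lebesgue_on \<Omega>. Lop \<Omega> A b c \<phi>1 x + lam1 * \<phi>1 x = 0"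
    and adj: "\<psi> \<in> borel_measurable (lebesgue_on \<Omega>)"
      "AE x in lebesgue_on \<Omega>. \<psi> x > 0"
      "\<forall>g. Lp p \<Omega> g \<longrightarrow> integrable (lebesgue_on \<Omega>) (\<lambda>x. g x * \<psi> x)"
      "\<forall>v. Xsp p \<Omega> v \<longrightarrow> (\<integral>x. (Lop \<Omega> A b c v x + lam1 * v x) * \<psi> x \<partial>lebesgue_on \<Omega>) = 0"
    and lam_pos: "0 < lam1"
    and B: "lam1 < B"
      "\<forall>b'. lam1 < b' \<and> b' < B \<longrightarrow> (\<forall>g. AP_cond b' g \<longrightarrow> bilip_homeo p \<Omega> A b c \<phi>1 \<psi> g)"
    and f: "\<exists>K. \<forall>x y. \<bar>f x - f y\<bar> \<le> K * \<bar>x - y\<bar>" "convex_on UNIV f" "AP_cond bb f"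
      "lam1 < bb" "bb < B"
    and z: "Lp p \<Omega> z" "(\<integral>x. z x * \<psi> x \<partial>lebesgue_on \<Omega>) = 0"
    and u: "\<forall>t. Xsp p \<Omega> (u t)
              \<and> (AE x in lebesgue_on \<Omega>. Psi \<Omega> A b c \<phi>1 \<psi> f (u t) x = z x + t * \<phi>1 x)"
  shows "((\<lambda>t. sob_norm p \<Omega> (\<lambda>x. (u t x - t * \<phi>1 x) / t)) \<longlongrightarrow> 0) at_infinity
       \<and> ((\<lambda>t. sob_norm p \<Omega> (\<lambda>x. u t x / t - \<phi>1 x)) \<longlongrightarrow> 0) at_infinity"
proof -
  have \<Omega>L: "\<Omega> \<in> sets lebesgue" using dom(1) by simp
  have \<Omega>L': "\<Omega> \<inter> space lebesgue \<in> sets lebesgue" using \<Omega>L by simp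
  have spc: "space (lebesgue_on \<Omega>) = \<Omega>" by (simp add: space_restrict_space)
  have p0: "p > 0" using p by (smt (verit) of_nat_0_less_iff finite_UNIV_card_ge_0 finite_class.finite_UNIV)
  have \<Omega>B: "\<Omega> \<in> sets lborel" using dom(1) by simp
  have fin: "emeasure lebesgue \<Omega> < \<infinity>"
    using emeasure_bounded_finite[OF dom(2)] \<Omega>B by simp
  have bil: "bilip_homeo p \<Omega> A b c \<phi>1 \<psi> f" using B(2) f(3-5) by blast
  obtain K where K: "K > 0" and Kb: "\<And>u v. Xsp p \<Omega> u \<Longrightarrow> Xsp p \<Omega> v \<Longrightarrow>
      sob_norm p \<Omega> (\<lambda>x. u x - v x) \<le> K * Lp_norm p \<Omega> (\<lambda>x. Psi \<Omega> A b c \<phi>1 \<psi> f u x - Psi \<Omega> A b c \<phi>1 \<psi> f v x)"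
    using bil unfolding bilip_homeo_def by blast
  have LPsi: "\<And>u. Xsp p \<Omega> u \<Longrightarrow> Lp p \<Omega> (Psi \<Omega> A b c \<phi>1 \<psi> f u)"
    using bil unfolding bilip_homeo_def by blast
  have W\<phi>: "W2p p \<Omega> \<phi>1" using eig(3) by (simp add: Xsp_def)
  have L\<phi>: "Lp p \<Omega> \<phi>1" using W\<phi> by (simp add: W2p_def)
  have \<phi>m: "\<phi>1 \<in> borel_measurable (lebesgue_on \<Omega>)" using L\<phi> by (simp add: Lp_def)
  have zm: "z \<in> borel_measurable (lebesgue_on \<Omega>)" using z(1) by (simp add: Lp_def)
  have i\<psi>: "integrable (lebesgue_on \<Omega>) \<psi>"
    using adj(3) Lp_const[OF \<Omega>L fin, of p 1] by auto
  have i\<phi>\<psi>: "integrable (lebesgue_on \<Omega>) (\<lambda>x. \<phi>1 x * \<psi> x)" using adj(3) L\<phi> by blast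
  define I where "I = (\<integral>x. \<phi>1 x * \<psi> x \<partial>lebesgue_on \<Omega>)"
  have I: "I > 0"
  proof -
    have ae: "AE x in lebesgue_on \<Omega>. 0 < \<phi>1 x * \<psi> x"
      using adj(2) AE_space by eventually_elim (use eig(5) spc in \<open>auto\<close>)
    have I0: "I \<ge> 0" unfolding I_def by (rule integral_nonneg_AE) (use ae in \<open>auto elim: AE_mp\<close>)
    have "I \<noteq> 0"
    proof
      assume "I = 0"
      have nn: "AE x in lebesgue_on \<Omega>. 0 \<le> \<phi>1 x * \<psi> x" using ae by eventually_elim simp
      have "AE x in lebesgue_on \<Omega>. \<phi>1 x * \<psi> x = 0"
        using integral_nonneg_eq_0_iff_AE[OF i\<phi>\<psi> nn] \<open>I = 0\<close> unfolding I_def by blast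
      with ae have "AE x in lebesgue_on \<Omega>. False" by eventually_elim simp
      then have "AE x in lebesgue. x \<notin> \<Omega>" using AE_restrict_space_iff[OF \<Omega>L'] by simp
      then obtain N where N: "{x \<in> space lebesgue. \<not> x \<notin> \<Omega>} \<subseteq> N" "N \<in> null_sets lebesgue"
        by (rule AE_E) (metis null_setsI)
      from N(1) have "\<Omega> \<subseteq> N" by auto
      have "\<Omega> \<in> null_sets lebesgue" by (rule null_sets_subset[OF N(2) \<Omega>L \<open>\<Omega> \<subseteq> N\<close>])
      then have "negligible \<Omega>" by (simp add: negligible_iff_null_sets)
      then show False using open_not_negligible[OF dom(1) dom(4)] by simp
    qed
    with I0 show ?thesis by simp
  qed
  obtain C0 where C0: "C0 \<ge> 0" "\<And>s. s \<ge> 0 \<Longrightarrow> \<bar>f s - bb * s\<bar> \<le> C0" "\<And>s. s \<le> 0 \<Longrightarrow> \<bar>f s\<bar> \<le> C0"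
    using AP_bound[OF f(3)] by blast
  have fcont: "continuous_on UNIV f"
    using f(1) lipschitz_cont by blast
  have fb: "f \<in> borel_measurable borel" by (rule borel_measurable_continuous_onI[OF fcont])
  define A1 where "A1 = (\<integral>x. \<bar>\<psi> x\<bar> \<partial>lebesgue_on \<Omega>)"
  define C1 where "C1 = C0 * A1 / I"
  define G where "G = (\<lambda>x. \<bar>z x\<bar> + C0 + C1 * \<bar>\<phi>1 x\<bar>)"
  have LG: "Lp p \<Omega> G"
    unfolding G_def
    by (intro Lp_add[OF p0] Lp_abs z(1) Lp_const[OF \<Omega>L fin] Lp_scale L\<phi>)
  define D where "D = Lp_norm p \<Omega> G"
  have main: "sob_norm p \<Omega> (\<lambda>x. u t x - t * \<phi>1 x) \<le> K * D" for t
  proof -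
    define v where "v = (\<lambda>x. t * \<phi>1 x)"
    have Xv: "Xsp p \<Omega> v" unfolding v_def by (rule Xsp_scale[OF p0 eig(3)])
    have Xu: "Xsp p \<Omega> (u t)" using u by blast
    have s1: "sob_norm p \<Omega> (\<lambda>x. u t x - v x) \<le> K * Lp_norm p \<Omega> (\<lambda>x. Psi \<Omega> A b c \<phi>1 \<psi> f (u t) x - Psi \<Omega> A b c \<phi>1 \<psi> f v x)"
      by (rule Kb[OF Xu Xv])
    define \<beta> where "\<beta> = (if t \<ge> 0 then bb else 0)"
    define e where "e = (\<lambda>x. f (t * \<phi>1 x) - \<beta> * (t * \<phi>1 x))"
    have ebound: "\<bar>e x\<bar> \<le> C0" if "x \<in> \<Omega>" for x
    proof (cases "t \<ge> 0")
      case True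
      then have "t * \<phi>1 x \<ge> 0" using eig(5)[rule_format, OF that] by simp
      then show ?thesis using C0(2) True by (simp add: e_def \<beta>_def)
    next
      case False
      then have "t * \<phi>1 x \<le> 0" using eig(5)[rule_format, OF that] by (simp add: mult_nonpos_nonneg less_imp_le)
      then show ?thesis using C0(3) False by (simp add: e_def \<beta>_def)
    qed
    have em: "e \<in> borel_measurable (lebesgue_on \<Omega>)"
      unfolding e_def using \<phi>m fb by measurable
    have ie\<psi>: "integrable (lebesgue_on \<Omega>) (\<lambda>x. e x * \<psi> x)"
    proof (rule Bochner_Integration.integrable_bound[OF integrable_mult_right[OF i\<psi>, of C0]])
      show "(\<lambda>x. e x * \<psi> x) \<in> borel_measurable (lebesgue_on \<Omega>)" using em i\<psi> by auto
      show "AE x in lebesgue_on \<Omega>. norm (e x * \<psi> x) \<le> norm (C0 * \<psi> x)"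
        using ebound C0(1) spc by (intro AE_I2) (auto simp: abs_mult intro!: mult_right_mono)
    qed
    define E where "E = (\<integral>x. e x * \<psi> x \<partial>lebesgue_on \<Omega>) / I"
    have Eb: "\<bar>E\<bar> \<le> C1"
    proof -
      have "\<bar>\<integral>x. e x * \<psi> x \<partial>lebesgue_on \<Omega>\<bar> \<le> (\<integral>x. \<bar>e x * \<psi> x\<bar> \<partial>lebesgue_on \<Omega>)"
        using integral_norm_bound[of "lebesgue_on \<Omega>" "\<lambda>x. e x * \<psi> x"] by simp
      also have "\<dots> \<le> (\<integral>x. C0 * \<bar>\<psi> x\<bar> \<partial>lebesgue_on \<Omega>)"
      proof (rule integral_mono)
        show "integrable (lebesgue_on \<Omega>) (\<lambda>x. \<bar>e x * \<psi> x\<bar>)" using ie\<psi> by (rule integrable_abs)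
        show "integrable (lebesgue_on \<Omega>) (\<lambda>x. C0 * \<bar>\<psi> x\<bar>)" using i\<psi> by auto
        fix x assume "x \<in> space (lebesgue_on \<Omega>)"
        then show "\<bar>e x * \<psi> x\<bar> \<le> C0 * \<bar>\<psi> x\<bar>"
          using ebound[of x] spc by (auto simp: abs_mult intro!: mult_right_mono)
      qed
      also have "\<dots> = C0 * A1" by (simp add: A1_def)
      finally show ?thesis using I by (simp add: E_def C1_def abs_divide divide_right_mono)
    qed
    note DS = derivs_scale_AE[OF dom(1) W\<phi>, of t]
    have aeD: "AE x in lebesgue_on \<Omega>. (\<forall>i\<in>UNIV. wgrad \<Omega> v i x = t * wgrad \<Omega> \<phi>1 i x)
        \<and> (\<forall>ij\<in>UNIV. whess \<Omega> v (fst ij) (snd ij) x = t * whess \<Omega> \<phi>1 (fst ij) (snd ij) x)"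
      unfolding v_def using DS
      by (intro AE_conjI AE_finite_allI) auto
    have aeL: "AE x in lebesgue_on \<Omega>. Lop \<Omega> A b c v x = - lam1 * (t * \<phi>1 x)"
      using aeD eig(6)
    proof eventually_elim
      case (elim x)
      have "Lop \<Omega> A b c v x = t * Lop \<Omega> A b c \<phi>1 x"
        using elim(1) unfolding Lop_def v_def
        by (simp add: sum_distrib_left algebra_simps)
      moreover have "Lop \<Omega> A b c \<phi>1 x = - lam1 * \<phi>1 x" using elim(2) by linarith
      ultimately show ?case by simp
    qed
    define Fv where "Fv = Fop \<Omega> A b c f v"
    have aeF: "AE x in lebesgue_on \<Omega>. Fv x = (lam1 - \<beta>) * t * \<phi>1 x - e x"
      using aeL by eventually_elim (simp add: Fv_def Fop_def e_def v_def algebra_simps)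
    have RHSm: "(\<lambda>x. ((lam1 - \<beta>) * t * \<phi>1 x - e x) * \<psi> x) \<in> borel_measurable (lebesgue_on \<Omega>)"
      using \<phi>m em i\<psi> by auto
    have ae2: "AE x in lebesgue_on \<Omega>. ((lam1 - \<beta>) * t * \<phi>1 x - e x) * \<psi> x = Fv x * \<psi> x"
      using aeF by eventually_elim simp
    have intF: "(\<integral>x. Fv x * \<psi> x \<partial>lebesgue_on \<Omega>) = (lam1 - \<beta>) * t * I - (\<integral>x. e x * \<psi> x \<partial>lebesgue_on \<Omega>)"
    proof -
      have "(\<integral>x. Fv x * \<psi> x \<partial>lebesgue_on \<Omega>) = (\<integral>x. ((lam1 - \<beta>) * t * \<phi>1 x - e x) * \<psi> x \<partial>lebesgue_on \<Omega>)"
        by (rule integral_cong_AE[OF meas_AE_on[OF \<Omega>L RHSm ae2] RHSm])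
          (use ae2 in \<open>auto elim: AE_mp\<close>)
      also have "\<dots> = (\<integral>x. (lam1 - \<beta>) * t * (\<phi>1 x * \<psi> x) - e x * \<psi> x \<partial>lebesgue_on \<Omega>)"
        by (simp add: algebra_simps)
      also have "\<dots> = (lam1 - \<beta>) * t * I - (\<integral>x. e x * \<psi> x \<partial>lebesgue_on \<Omega>)"
        using i\<phi>\<psi> ie\<psi> by (simp add: Bochner_Integration.integral_diff I_def)
      finally show ?thesis .
    qed
    have cF: "coef \<Omega> \<phi>1 \<psi> Fv = (lam1 - \<beta>) * t - E"
      using I by (simp add: coef_def intF E_def I_def[symmetric] diff_divide_distrib)
    have cv: "coef \<Omega> \<phi>1 \<psi> v = t"
      using I by (simp add: coef_def v_def I_def[symmetric] mult.assoc)
    have aePv: "AE x in lebesgue_on \<Omega>. Psi \<Omega> A b c \<phi>1 \<psi> f v x = - e x + E * \<phi>1 x + t * \<phi>1 x"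
      using aeF
    proof eventually_elim
      case (elim x)
      show ?case
        unfolding Psi_def Pproj_def Fv_def[symmetric] cF cv elim
        by (simp add: algebra_simps)
    qed
    have aeR: "AE x in lebesgue_on \<Omega>. \<bar>Psi \<Omega> A b c \<phi>1 \<psi> f (u t) x - Psi \<Omega> A b c \<phi>1 \<psi> f v x\<bar> \<le> G x"
      using aePv u[rule_format, of t, THEN conjunct2] AE_space
    proof eventually_elim
      case (elim x)
      then have "\<bar>Psi \<Omega> A b c \<phi>1 \<psi> f (u t) x - Psi \<Omega> A b c \<phi>1 \<psi> f v x\<bar> = \<bar>z x + e x - E * \<phi>1 x\<bar>"
        by simp
      also have "\<dots> \<le> \<bar>z x\<bar> + \<bar>e x\<bar> + \<bar>E\<bar> * \<bar>\<phi>1 x\<bar>" by (simp add: abs_mult[symmetric] abs_triangle_ineq4 order_trans[OF abs_triangle_ineq4] abs_triangle_ineq)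
      also have "\<dots> \<le> G x"
        unfolding G_def using ebound[of x] elim(3) spc Eb
        by (intro add_mono mult_right_mono) auto
      finally show ?case .
    qed
    have Rm: "(\<lambda>x. Psi \<Omega> A b c \<phi>1 \<psi> f (u t) x - Psi \<Omega> A b c \<phi>1 \<psi> f v x) \<in> borel_measurable (lebesgue_on \<Omega>)"
      using LPsi[OF Xu] LPsi[OF Xv] by (auto simp: Lp_def)
    have "Lp_norm p \<Omega> (\<lambda>x. Psi \<Omega> A b c \<phi>1 \<psi> f (u t) x - Psi \<Omega> A b c \<phi>1 \<psi> f v x) \<le> D"
      unfolding D_def by (rule Lp_norm_mono[OF p0 LG Rm aeR])
    then have "K * Lp_norm p \<Omega> (\<lambda>x. Psi \<Omega> A b c \<phi>1 \<psi> f (u t) x - Psi \<Omega> A b c \<phi>1 \<psi> f v x) \<le> K * D"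
      using K by (intro mult_left_mono) auto
    with s1 show ?thesis by (simp add: v_def)
  qed
  have est: "sob_norm p \<Omega> (\<lambda>x. (u t x - t * \<phi>1 x) / t) \<le> K * D * norm (inverse t)" if t: "t \<noteq> 0" for t
  proof -
    have Wu: "W2p p \<Omega> (u t)" using u by (simp add: Xsp_def)
    have "W2p p \<Omega> (\<lambda>x. 1 * u t x + (- t) * \<phi>1 x)" by (rule W2p_lin[OF p0 Wu W\<phi>])
    then have Wd: "W2p p \<Omega> (\<lambda>x. u t x - t * \<phi>1 x)" by simp
    have "(\<lambda>x. (u t x - t * \<phi>1 x) / t) = (\<lambda>x. (1 / t) * (u t x - t * \<phi>1 x))" by auto
    then have "sob_norm p \<Omega> (\<lambda>x. (u t x - t * \<phi>1 x) / t) = \<bar>1 / t\<bar> * sob_norm p \<Omega> (\<lambda>x. u t x - t * \<phi>1 x)"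
      using sob_norm_scale[OF dom(1) p0 Wd, of "1 / t"] by simp
    also have "\<dots> \<le> \<bar>1 / t\<bar> * (K * D)" by (intro mult_left_mono main) auto
    finally show ?thesis by (simp add: abs_inverse divide_inverse mult.commute)
  qed
  have sn: "sob_norm p \<Omega> g \<ge> 0" for g
    unfolding sob_norm_def by (intro add_nonneg_nonneg sum_nonneg Lp_norm_nonneg)
  have ev: "\<forall>\<^sub>F t in at_infinity. (t::real) \<noteq> 0"
    unfolding eventually_at_infinity by (intro exI[of _ 1]) auto
  have lim1: "((\<lambda>t. sob_norm p \<Omega> (\<lambda>x. (u t x - t * \<phi>1 x) / t)) \<longlongrightarrow> 0) at_infinity"
  proof (rule Lim_null_comparison)
    show "\<forall>\<^sub>F t in at_infinity. norm (sob_norm p \<Omega> (\<lambda>x. (u t x - t * \<phi>1 x) / t)) \<le> K * D * norm (inverse t)"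
      using ev by eventually_elim (use est sn in auto)
    have "((\<lambda>t::real. norm (inverse t)) \<longlongrightarrow> 0) at_infinity"
      by (rule tendsto_norm_zero[OF tendsto_inverse_0])
    then show "((\<lambda>t::real. K * D * norm (inverse t)) \<longlongrightarrow> 0) at_infinity"
      by (rule tendsto_mult_right_zero)
  qed
  have "\<forall>\<^sub>F t in at_infinity. sob_norm p \<Omega> (\<lambda>x. (u t x - t * \<phi>1 x) / t) = sob_norm p \<Omega> (\<lambda>x. u t x / t - \<phi>1 x)"
    using ev by eventually_elim (auto simp: diff_divide_distrib)
  then have lim2: "((\<lambda>t. sob_norm p \<Omega> (\<lambda>x. u t x / t - \<phi>1 x)) \<longlongrightarrow> 0) at_infinity"
    using lim1 by (rule Lim_transform_eventually[rotated])
  show ?thesis using lim1 lim2 by blast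
qed


end
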